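(* Let $q$ be a prime power, $m\ge1$, $1\le k<n$. For every $E\in \mathcal T(k,n)$ the polynomial $f_E$ is square-free. In particular, the polynomial $f^*$ is square-free.
   Context: $\mathcal T(k,n)=\{E\in \mathbb{F}_q^{k\times n} \mid E \text{ is in reduced row echelon form and } \mathrm{rk}(E)=k\}$. Let $X$ be the $k\times(n-k)$ matrix whose entries are the indeterminates $x_1,\dots,x_{k(n-k)}$ (each appearing once). For $E\in\mathcal T(k,n)$ define $f_E:=\det([\,I_k\mid X\,]E^T)\in\mathbb{F}_{q^m}[x_1,\dots,x_{k(n-k)}]$, and $f^*:=\mathrm{lcm}\{f_E \mid E\in\mathcal T(k,n)\}$. *)

theory Defs
  imports "HOL-Library.Poly_Mapping" "HOL-Computational_Algebra.Squarefree"
    "Jordan_Normal_Form.DL_Rank" "Jordan_Normal_Form.Gauss_Jordan_Elimination"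
begin

text \<open>Multivariate polynomials over 'a in the variables x_0, x_1, ... (indexed by nat):
  a polynomial maps exponent vectors (nat =>0 nat) to coefficients.\<close>
type_synonym 'a mpoly = "(nat \<Rightarrow>\<^sub>0 nat) \<Rightarrow>\<^sub>0 'a"

definition mpVar :: "nat \<Rightarrow> 'a::comm_semiring_1 mpoly" where
  "mpVar v = Poly_Mapping.single (Poly_Mapping.single v 1) 1"

definition mpConst :: "'a::comm_semiring_1 \<Rightarrow> 'a mpoly" where
  "mpConst c = Poly_Mapping.single 0 c"

definition prime_power :: "nat \<Rightarrow> bool" where
  "prime_power q \<longleftrightarrow> (\<exists>p r. prime p \<and> r \<ge> 1 \<and> q = p ^ r)"

definition is_subfield :: "'a::field set \<Rightarrow> bool" where
  "is_subfield F \<longleftrightarrow> 0 \<in> F \<and> 1 \<in> F \<and> (\<forall>x\<in>F. \<forall>y\<in>F. x + y \<in> F \<and> x * y \<in> F)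
     \<and> (\<forall>x\<in>F. - x \<in> F) \<and> (\<forall>x\<in>F. inverse x \<in> F)"

definition rref_set :: "'a::field set \<Rightarrow> nat \<Rightarrow> nat \<Rightarrow> 'a mat set" where
  "rref_set Fq k n = {E. E \<in> carrier_mat k n \<and> elements_mat E \<subseteq> Fq \<and> row_echelon_form E
      \<and> vec_space.rank k E = k}"

text \<open>The k x (n-k) matrix X of indeterminates, row-major: X(i,j) = x_(i*(n-k)+j),
  and the k x n matrix [I_k | X].\<close>
definition IX_mat :: "nat \<Rightarrow> nat \<Rightarrow> 'a::comm_ring_1 mpoly mat" where
  "IX_mat k n = mat k n (\<lambda>(i,j). if j < k then (if i = j then 1 else 0)
                                  else mpVar (i * (n - k) + (j - k)))"

definition fE :: "nat \<Rightarrow> nat \<Rightarrow> 'a::comm_ring_1 mat \<Rightarrow> 'a mpoly" where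
  "fE k n E = det (IX_mat k n * transpose_mat (map_mat mpConst E))"

definition is_lcm_of :: "'b::comm_monoid_mult set \<Rightarrow> 'b \<Rightarrow> bool" where
  "is_lcm_of S L \<longleftrightarrow> (\<forall>s\<in>S. s dvd L) \<and> (\<forall>M. (\<forall>s\<in>S. s dvd M) \<longrightarrow> L dvd M)"

end

theory Submission
  imports Defs
begin


lemma mpConst_0[simp]: "mpConst 0 = 0" by (simp add: mpConst_def)
lemma mpConst_1[simp]: "mpConst 1 = 1" by (simp add: mpConst_def)
lemma mpConst_add: "mpConst (a + b) = mpConst a + mpConst b"
  by (simp add: mpConst_def single_add)
lemma mpConst_mult: "mpConst (a * b) = mpConst a * mpConst b"
  by (simp add: mpConst_def mult_single)

lemma mpConst_hom: "comm_semiring_hom (mpConst :: 'a::comm_semiring_1 \<Rightarrow> 'a mpoly)"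
  by unfold_locales (auto simp: mpConst_add mpConst_mult)

lemma mpConst_ring_hom: "comm_ring_hom (mpConst :: 'a::comm_ring_1 \<Rightarrow> 'a mpoly)"
  by unfold_locales (auto simp: mpConst_add mpConst_mult)

subsection \<open>Evaluation homomorphism\<close>

definition mon_ev :: "(nat \<Rightarrow> 'b::comm_semiring_1) \<Rightarrow> (nat \<Rightarrow>\<^sub>0 nat) \<Rightarrow> 'b" where
  "mon_ev g m = (\<Prod>v\<in>Poly_Mapping.keys m. g v ^ Poly_Mapping.lookup m v)"

definition ev :: "(nat \<Rightarrow> 'b::comm_semiring_1) \<Rightarrow> ('a::comm_semiring_1 \<Rightarrow> 'b) \<Rightarrow> 'a mpoly \<Rightarrow> 'b" where
  "ev g c p = (\<Sum>m\<in>Poly_Mapping.keys p. c (Poly_Mapping.lookup p m) * mon_ev g m)"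

lemma mon_ev_superset:
  assumes "finite K" "Poly_Mapping.keys m \<subseteq> K"
  shows "mon_ev g m = (\<Prod>v\<in>K. g v ^ Poly_Mapping.lookup m v)"
  unfolding mon_ev_def
  by (rule prod.mono_neutral_left[OF assms(1,2)]) (auto simp: in_keys_iff)

lemma mon_ev_add: "mon_ev g (m1 + m2) = mon_ev g m1 * mon_ev g m2"
proof -
  let ?K = "Poly_Mapping.keys m1 \<union> Poly_Mapping.keys m2"
  have "mon_ev g (m1 + m2) = (\<Prod>v\<in>?K. g v ^ Poly_Mapping.lookup (m1 + m2) v)"
    by (rule mon_ev_superset) (auto dest: subsetD[OF keys_add])
  also have "\<dots> = (\<Prod>v\<in>?K. g v ^ Poly_Mapping.lookup m1 v) * (\<Prod>v\<in>?K. g v ^ Poly_Mapping.lookup m2 v)"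
    by (simp add: lookup_add power_add prod.distrib)
  also have "\<dots> = mon_ev g m1 * mon_ev g m2"
    by (subst (1 2) mon_ev_superset[of ?K]) auto
  finally show ?thesis .
qed

lemma mon_ev_0[simp]: "mon_ev g 0 = 1" by (simp add: mon_ev_def)

lemma mon_ev_single[simp]: "mon_ev g (Poly_Mapping.single v 1) = g v"
  unfolding mon_ev_def by (simp add: lookup_single)
lemma mon_ev_single'[simp]: "mon_ev g (Poly_Mapping.single v (Suc 0)) = g v"
  using mon_ev_single[of g v] by simp

lemma poly_mapping_decomp: "p = (\<Sum>m\<in>Poly_Mapping.keys p. Poly_Mapping.single m (Poly_Mapping.lookup p m))"
  by (rule poly_mapping_eqI)
     (auto simp: lookup_sum lookup_single when_def in_keys_iff sum.delta' split: if_splits)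

context
  fixes c :: "'a::comm_semiring_1 \<Rightarrow> 'b::comm_semiring_1"
  assumes c: "comm_semiring_hom c"
begin

interpretation c: comm_semiring_hom c by (rule c)

lemma ev_superset:
  assumes "finite K" "Poly_Mapping.keys p \<subseteq> K"
  shows "ev g c p = (\<Sum>m\<in>K. c (Poly_Mapping.lookup p m) * mon_ev g m)"
  unfolding ev_def
  by (rule sum.mono_neutral_left[OF assms(1,2)]) (auto simp: in_keys_iff)

lemma ev_add: "ev g c (p + q) = ev g c p + ev g c q"
proof -
  let ?K = "Poly_Mapping.keys p \<union> Poly_Mapping.keys q"
  have "ev g c (p + q) = (\<Sum>m\<in>?K. c (Poly_Mapping.lookup (p + q) m) * mon_ev g m)"
    by (rule ev_superset) (auto dest: subsetD[OF keys_add])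
  also have "\<dots> = (\<Sum>m\<in>?K. c (Poly_Mapping.lookup p m) * mon_ev g m) + (\<Sum>m\<in>?K. c (Poly_Mapping.lookup q m) * mon_ev g m)"
    by (simp add: lookup_add c.hom_add distrib_right sum.distrib)
  also have "\<dots> = ev g c p + ev g c q"
    by (subst (1 2) ev_superset[of ?K]) auto
  finally show ?thesis .
qed

lemma ev_0[simp]: "ev g c 0 = 0" by (simp add: ev_def)

lemma ev_sum: "ev g c (sum f A) = (\<Sum>x\<in>A. ev g c (f x))"
  by (induct A rule: infinite_finite_induct) (auto simp: ev_add)

lemma ev_single: "ev g c (Poly_Mapping.single m a) = c a * mon_ev g m"
  by (cases "a = 0") (auto simp: ev_def)


lemma ev_mult_single: "ev g c (Poly_Mapping.single m a * Poly_Mapping.single m' b)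
    = ev g c (Poly_Mapping.single m a) * ev g c (Poly_Mapping.single m' b)"
  by (simp add: mult_single ev_single mon_ev_add c.hom_mult mult_ac)

lemma ev_mult: "ev g c (p * q) = ev g c p * ev g c q"
proof -
  have "ev g c (p * q) = ev g c ((\<Sum>m\<in>Poly_Mapping.keys p. Poly_Mapping.single m (Poly_Mapping.lookup p m)) *
      (\<Sum>m'\<in>Poly_Mapping.keys q. Poly_Mapping.single m' (Poly_Mapping.lookup q m')))"
    by (subst (1) poly_mapping_decomp[of p], subst (1) poly_mapping_decomp[of q]) simp
  also have "\<dots> = (\<Sum>m\<in>Poly_Mapping.keys p. \<Sum>m'\<in>Poly_Mapping.keys q. ev g c (Poly_Mapping.single m (Poly_Mapping.lookup p m) * Poly_Mapping.single m' (Poly_Mapping.lookup q m')))"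
    by (simp add: sum_distrib_left sum_distrib_right ev_sum sum.swap[of _ "Poly_Mapping.keys q"])
  also have "\<dots> = (\<Sum>m\<in>Poly_Mapping.keys p. \<Sum>m'\<in>Poly_Mapping.keys q. ev g c (Poly_Mapping.single m (Poly_Mapping.lookup p m)) * ev g c (Poly_Mapping.single m' (Poly_Mapping.lookup q m')))"
    by (simp add: ev_mult_single)
  also have "\<dots> = (\<Sum>m\<in>Poly_Mapping.keys p. ev g c (Poly_Mapping.single m (Poly_Mapping.lookup p m))) * (\<Sum>m'\<in>Poly_Mapping.keys q. ev g c (Poly_Mapping.single m' (Poly_Mapping.lookup q m')))"
    by (rule sum_product[symmetric])
  also have "\<dots> = ev g c (\<Sum>m\<in>Poly_Mapping.keys p. Poly_Mapping.single m (Poly_Mapping.lookup p m)) * ev g c (\<Sum>m'\<in>Poly_Mapping.keys q. Poly_Mapping.single m' (Poly_Mapping.lookup q m'))"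
    by (simp add: ev_sum)
  also have "\<dots> = ev g c p * ev g c q"
    by (simp flip: poly_mapping_decomp)
  finally show ?thesis .
qed

lemma ev_1[simp]: "ev g c 1 = 1"
proof -
  show ?thesis using ev_single[of g 0 1] by simp
qed

lemma ev_hom: "comm_semiring_hom (ev g c)"
  by unfold_locales (auto simp: ev_add ev_mult)

lemma ev_mpVar[simp]: "ev g c (mpVar v) = g v"
  by (simp add: mpVar_def ev_single)

lemma ev_mpConst[simp]: "ev g c (mpConst a) = c a"
  by (simp add: mpConst_def ev_single)

end

lemma ev_ring_hom:
  fixes c :: "'a::comm_ring_1 \<Rightarrow> 'b::comm_ring_1"
  assumes "comm_ring_hom c" shows "comm_ring_hom (ev g c)"
proof -
  interpret c: comm_ring_hom c by fact
  have "comm_semiring_hom c" by unfold_locales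
  then interpret e: comm_semiring_hom "ev g c" by (rule ev_hom)
  show ?thesis by unfold_locales
qed

lemma single_as_prod:
  "Poly_Mapping.single m (a::'a::comm_semiring_1) = mpConst a * (\<Prod>v\<in>Poly_Mapping.keys m. mpVar v ^ Poly_Mapping.lookup m v)"
proof -
  have "\<And>K. finite K \<Longrightarrow> (\<Prod>v\<in>K. (mpVar v :: 'a mpoly) ^ Poly_Mapping.lookup m v)
      = Poly_Mapping.single (\<Sum>v\<in>K. Poly_Mapping.single v (Poly_Mapping.lookup m v)) 1"
  proof -
    fix K :: "nat set" assume "finite K"
    then show "(\<Prod>v\<in>K. (mpVar v :: 'a mpoly) ^ Poly_Mapping.lookup m v)
      = Poly_Mapping.single (\<Sum>v\<in>K. Poly_Mapping.single v (Poly_Mapping.lookup m v)) 1"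
    proof (induct K rule: finite_induct)
      case empty then show ?case by simp
    next
      case (insert x F)
      have pw: "\<And>n. (mpVar x :: 'a mpoly) ^ n = Poly_Mapping.single (Poly_Mapping.single x n) 1"
      proof -
        fix n show "(mpVar x :: 'a mpoly) ^ n = Poly_Mapping.single (Poly_Mapping.single x n) 1"
          by (induct n) (auto simp: mpVar_def mult_single single_add[symmetric])
      qed
      show ?case using insert by (simp add: pw mult_single)
    qed
  qed
  moreover have "(\<Sum>v\<in>Poly_Mapping.keys m. Poly_Mapping.single v (Poly_Mapping.lookup m v)) = m"
    by (rule poly_mapping_decomp[symmetric])
  ultimately show ?thesis by (simp add: mpConst_def mult_single)
qed

lemma mpoly_hom_unique:
  fixes \<phi> :: "'a::comm_semiring_1 mpoly \<Rightarrow> 'b::comm_semiring_1"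
  assumes "comm_semiring_hom \<phi>" "comm_semiring_hom c"
    and "\<And>v. \<phi> (mpVar v) = g v" and "\<And>a. \<phi> (mpConst a) = c a"
  shows "\<phi> p = ev g c p"
proof -
  interpret \<phi>: comm_semiring_hom \<phi> by fact
  have s: "\<phi> (Poly_Mapping.single m a) = ev g c (Poly_Mapping.single m a)" for m a
  proof -
    have "\<phi> (Poly_Mapping.single m a) = c a * (\<Prod>v\<in>Poly_Mapping.keys m. g v ^ Poly_Mapping.lookup m v)"
      by (subst single_as_prod) (simp add: \<phi>.hom_mult \<phi>.hom_prod \<phi>.hom_power assms(3,4))
    also have "\<dots> = ev g c (Poly_Mapping.single m a)" by (simp add: ev_single[OF assms(2)] mon_ev_def)
    finally show ?thesis .
  qed
  have "\<phi> p = \<phi> (\<Sum>m\<in>Poly_Mapping.keys p. Poly_Mapping.single m (Poly_Mapping.lookup p m))"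
    by (rule arg_cong[where f=\<phi>, OF poly_mapping_decomp])
  also have "\<dots> = (\<Sum>m\<in>Poly_Mapping.keys p. ev g c (Poly_Mapping.single m (Poly_Mapping.lookup p m)))"
    by (simp add: \<phi>.hom_sum s)
  also have "\<dots> = ev g c p"
    using ev_sum[OF assms(2), symmetric, of g "\<lambda>m. Poly_Mapping.single m (Poly_Mapping.lookup p m)" "Poly_Mapping.keys p"]
    by (simp flip: poly_mapping_decomp)
  finally show ?thesis .
qed

lemma id_hom: "comm_semiring_hom id" by unfold_locales auto

lemma ev_id: "ev mpVar mpConst p = p"
proof -
  have "id p = ev mpVar mpConst p"
    by (rule mpoly_hom_unique[OF id_hom mpConst_hom]) auto
  thus ?thesis by simp
qed


definition Good :: "'a::comm_semiring_1 \<Rightarrow> bool" where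
  "Good p \<longleftrightarrow> p \<noteq> 0 \<and> (p dvd 1 \<or> prime_elem p)"

lemma Good_hom_inv:
  fixes \<phi> :: "'a::comm_ring_1 \<Rightarrow> 'b::comm_ring_1" and \<psi> :: "'b \<Rightarrow> 'a"
  assumes "comm_ring_hom \<phi>" "comm_ring_hom \<psi>"
    and inv1: "\<And>x. \<psi> (\<phi> x) = x" and inv2: "\<And>x. \<phi> (\<psi> x) = x"
    and G: "Good q"
  shows "Good (\<phi> q)"
proof -
  interpret \<phi>: comm_ring_hom \<phi> by fact
  interpret \<psi>: comm_ring_hom \<psi> by fact
  have nz: "\<phi> q \<noteq> 0"
  proof
    assume "\<phi> q = 0" then have "\<psi> (\<phi> q) = 0" by simp
    with inv1 G show False by (simp add: Good_def)
  qed
  show ?thesis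
  proof (cases "q dvd 1")
    case True then show ?thesis using nz by (simp add: Good_def)
  next
    case False
    with G have p: "prime_elem q" by (simp add: Good_def)
    have "prime_elem (\<phi> q)"
      unfolding prime_elem_def
    proof (intro conjI allI impI)
      show "\<phi> q \<noteq> 0" by fact
      show "\<not> \<phi> q dvd 1"
      proof
        assume "\<phi> q dvd 1" then have "\<psi> (\<phi> q) dvd 1" by simp
        with inv1 False show False by simp
      qed
      fix a b assume "\<phi> q dvd a * b"
      then have "\<psi> (\<phi> q) dvd \<psi> (a * b)" by (rule \<psi>.hom_dvd)
      then have "\<psi> (\<phi> q) dvd \<psi> a * \<psi> b" by (simp only: \<psi>.hom_mult)
      then have "q dvd \<psi> a \<or> q dvd \<psi> b" using p inv1 by (simp add: prime_elem_dvd_mult_iff)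
      then have "\<phi> q dvd \<phi> (\<psi> a) \<or> \<phi> q dvd \<phi> (\<psi> b)" by (auto intro: \<phi>.hom_dvd)
      then show "\<phi> q dvd a \<or> \<phi> q dvd b" by (simp only: inv2)
    qed
    then show ?thesis using nz by (simp add: Good_def)
  qed
qed

lemma Good_unit_mult:
  fixes u p :: "'a::comm_semiring_1"
  assumes "u dvd 1" "Good p" shows "Good (u * p)"
proof -
  have "u * p \<noteq> 0"
  proof
    assume "u * p = 0"
    from assms(1) obtain w where "1 = u * w" by (auto elim: dvdE)
    then have "p = w * (u * p)" by (simp add: mult_ac)
    with \<open>u * p = 0\<close> assms(2) show False by (simp add: Good_def)
  qed
  moreover have "u * p dvd 1 \<or> prime_elem (u * p)"
  proof (cases "p dvd 1")
    case True then show ?thesis using assms(1) by (simp add: is_unit_mult_iff)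
  next
    case False
    with assms have p: "prime_elem p" by (simp add: Good_def)
    have "prime_elem (u * p)" unfolding prime_elem_def
    proof (intro conjI allI impI)
      show "u * p \<noteq> 0" by fact
      show "\<not> u * p dvd 1" using False by (meson dvd_mult_right)
      fix a b assume "u * p dvd a * b"
      then have "p dvd a * b" by (meson dvd_mult_right)
      then have "p dvd a \<or> p dvd b" using p by (simp add: prime_elem_dvd_mult_iff)
      then show "u * p dvd a \<or> u * p dvd b" using assms(1) by (metis mult_unit_dvd_iff')
    qed
    then show ?thesis ..
  qed
  ultimately show ?thesis by (simp add: Good_def)
qed

definition Sub :: "(nat \<Rightarrow> 'a::comm_ring_1 mpoly) \<Rightarrow> 'a mpoly \<Rightarrow> 'a mpoly" where
  "Sub \<sigma> = ev \<sigma> mpConst"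

lemma Sub_hom: "comm_ring_hom (Sub \<sigma>)"
  unfolding Sub_def by (rule ev_ring_hom[OF mpConst_ring_hom])

lemma Sub_mpVar[simp]: "Sub \<sigma> (mpVar v) = \<sigma> v"
  by (simp add: Sub_def mpConst_hom)
lemma Sub_mpConst[simp]: "Sub \<sigma> (mpConst a) = mpConst a"
  by (simp add: Sub_def mpConst_hom)

lemma Sub_comp_id:
  assumes "\<And>v. Sub \<tau> (\<sigma> v) = mpVar v"
  shows "Sub \<tau> (Sub \<sigma> p) = p"
proof -
  interpret s: comm_ring_hom "Sub \<sigma>" by (rule Sub_hom)
  interpret t: comm_ring_hom "Sub \<tau>" by (rule Sub_hom)
  have "comm_semiring_hom (Sub \<tau> \<circ> Sub \<sigma>)" by unfold_locales (auto simp: s.hom_add t.hom_add s.hom_mult t.hom_mult)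
  then have "(Sub \<tau> \<circ> Sub \<sigma>) p = ev mpVar mpConst p"
    by (rule mpoly_hom_unique[OF _ mpConst_hom]) (auto simp: assms)
  then show ?thesis by (simp add: ev_id)
qed

lemma Good_Sub:
  assumes "\<And>v. Sub \<tau> (\<sigma> v) = mpVar v" "\<And>v. Sub \<sigma> (\<tau> v) = mpVar v"
    and "Good (Sub \<sigma> p)"
  shows "Good p"
proof -
  have "Good (Sub \<tau> (Sub \<sigma> p))"
    by (rule Good_hom_inv[where \<phi>="Sub \<tau>" and \<psi>="Sub \<sigma>", OF Sub_hom Sub_hom]) (auto simp: Sub_comp_id assms)
  then show ?thesis by (simp add: Sub_comp_id assms)
qed

subsection \<open>Viewing a polynomial as univariate in one variable\<close>

lemma const_poly_hom: "comm_ring_hom (\<lambda>x::'a::comm_ring_1. [:x:])"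
  by unfold_locales auto

definition Lam :: "nat \<Rightarrow> 'a::comm_ring_1 mpoly \<Rightarrow> 'a mpoly poly" where
  "Lam y = ev (\<lambda>w. if w = y then [:0, 1:] else [:mpVar w:]) (\<lambda>a. [:mpConst a:])"

lemma const_mpConst_hom: "comm_ring_hom (\<lambda>a::'a::comm_ring_1. [:mpConst a:])"
  by unfold_locales (auto simp: mpConst_add mpConst_mult)

lemma Lam_hom: "comm_ring_hom (Lam y)"
  unfolding Lam_def by (rule ev_ring_hom[OF const_mpConst_hom])

lemma comm_ring_hom_semi: "comm_ring_hom f \<Longrightarrow> comm_semiring_hom f"
  by (simp add: comm_ring_hom_def ring_hom_def comm_semiring_hom_def)

lemma Lam_mpVar[simp]: "Lam y (mpVar w) = (if w = y then [:0, 1:] else [:mpVar w:])"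
  unfolding Lam_def by (rule ev_mpVar[OF comm_ring_hom_semi[OF const_mpConst_hom]])
lemma Lam_mpConst[simp]: "Lam y (mpConst a) = [:mpConst a:]"
  unfolding Lam_def by (rule ev_mpConst[OF comm_ring_hom_semi[OF const_mpConst_hom]])

definition Gam :: "nat \<Rightarrow> 'a::comm_ring_1 mpoly poly \<Rightarrow> 'a mpoly" where
  "Gam y p = poly p (mpVar y)"

lemma Gam_hom: "comm_ring_hom (Gam y)"
  unfolding Gam_def by unfold_locales (auto simp: poly_add poly_mult)

lemma Gam_Lam[simp]: "Gam y (Lam y p) = p"
proof -
  interpret L: comm_ring_hom "Lam y" by (rule Lam_hom)
  interpret G: comm_ring_hom "Gam y" by (rule Gam_hom)
  have "comm_semiring_hom (Gam y \<circ> Lam y)"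
    by unfold_locales (auto simp: L.hom_add G.hom_add L.hom_mult G.hom_mult)
  then have "(Gam y \<circ> Lam y) p = ev mpVar mpConst p"
    by (rule mpoly_hom_unique[OF _ mpConst_hom]) (auto simp: Gam_def)
  then show ?thesis by (simp add: ev_id)
qed

definition yfree :: "nat \<Rightarrow> 'a::comm_ring_1 mpoly \<Rightarrow> bool" where
  "yfree y u \<longleftrightarrow> Lam y u = [:u:]"

lemma yfree_mpVar: "w \<noteq> y \<Longrightarrow> yfree y (mpVar w)" by (simp add: yfree_def)
lemma yfree_mpConst: "yfree y (mpConst a)" by (simp add: yfree_def)
context fixes y :: nat begin
interpretation L: comm_ring_hom "Lam y :: 'a::comm_ring_1 mpoly \<Rightarrow> _" by (rule Lam_hom)
lemma yfree_0: "yfree y (0::'a::comm_ring_1 mpoly)" by (simp add: yfree_def)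
lemma yfree_1: "yfree y (1::'a::comm_ring_1 mpoly)" by (simp add: yfree_def)
lemma yfree_add: "yfree y a \<Longrightarrow> yfree y b \<Longrightarrow> yfree y (a + b)"
  by (simp add: yfree_def L.hom_add)
lemma yfree_minus: "yfree y a \<Longrightarrow> yfree y b \<Longrightarrow> yfree y (a - b)"
  by (simp add: yfree_def L.hom_minus)
lemma yfree_uminus: "yfree y a \<Longrightarrow> yfree y (- a)"
  by (simp add: yfree_def L.hom_uminus)
lemma yfree_mult: "yfree y a \<Longrightarrow> yfree y b \<Longrightarrow> yfree y (a * b)"
  by (simp add: yfree_def L.hom_mult)
end
lemma yfree_power: "yfree y a \<Longrightarrow> yfree y (a ^ n)"
  by (induct n) (auto intro: yfree_mult yfree_1)
lemma yfree_sum: "(\<And>x. x \<in> A \<Longrightarrow> yfree y (f x)) \<Longrightarrow> yfree y (sum f A)"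
  by (induct A rule: infinite_finite_induct) (auto intro: yfree_add yfree_0)

lemma yfree_det:
  assumes "\<And>i j. i < dim_row M \<Longrightarrow> j < dim_col M \<Longrightarrow> yfree y (M $$ (i,j))"
  shows "yfree y (det M)"
proof -
  interpret L: comm_ring_hom "Lam y" by (rule Lam_hom)
  interpret C: comm_ring_hom "\<lambda>x::'a mpoly. [:x:]" by (rule const_poly_hom)
  have "map_mat (Lam y) M = map_mat (\<lambda>x. [:x:]) M"
    using assms by (intro eq_matI) (auto simp: yfree_def)
  then have "Lam y (det M) = [:det M:]"
    by (metis L.hom_det C.hom_det)
  then show ?thesis by (simp add: yfree_def)
qed

subsection \<open>The key primality criterion\<close>

lemma unit_poly_degree:
  fixes P :: "'b::idom poly"
  assumes "P dvd 1" shows "degree P = 0"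
proof -
  from assms obtain Q where "1 = P * Q" by (auto elim: dvdE)
  then have "P \<noteq> 0" "Q \<noteq> 0" by auto
  then have "degree (P * Q) = degree P + degree Q" by (rule degree_mult_eq)
  then have "degree P + degree Q = 0" using \<open>1 = P * Q\<close> by (metis degree_1)
  then show ?thesis by simp
qed

lemma DH_prime:
  fixes D h :: "'a::idom mpoly"
  assumes yD: "yfree y D" and yh: "yfree y h" and D0: "D \<noteq> 0"
    and Dc: "D dvd 1 \<or> (prime_elem D \<and> \<not> D dvd h)"
  shows "prime_elem (D * mpVar y + h)"
proof -
  interpret L: comm_ring_hom "Lam y" by (rule Lam_hom)
  interpret G: comm_ring_hom "Gam y" by (rule Gam_hom)
  define f where "f = D * mpVar y + h"
  define P where "P = [:h, D:]"
  have Lf: "Lam y f = P"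
    using yD yh unfolding f_def P_def yfree_def by (simp add: L.hom_add L.hom_mult)
  have Gf: "Gam y P = f" using Lf[symmetric] by simp
  have degP: "degree P = 1" using D0 by (simp add: P_def)
  have P0: "P \<noteq> 0" using D0 by (simp add: P_def)
  have lcP: "coeff P (degree P) = D" using degP by (simp add: P_def)
  have LD: "Lam y (D ^ e) = [:D ^ e:]" for e
    using yfree_power[OF yD] by (simp add: yfree_def)
  have div: "\<exists>e q \<rho>. Lam y (D ^ e * a) = P * q + [:\<rho>:]" for a
  proof -
    obtain q r where qr: "pseudo_divmod (Lam y a) P = (q, r)" by force
    note pd = pseudo_divmod[OF P0 qr]
    from pd(2) degP have "degree r = 0" by auto
    then have r: "r = [:coeff r 0:]" by (metis degree_0_id)
    let ?e = "Suc (degree (Lam y a)) - degree P"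
    have "Lam y (D ^ ?e * a) = [:D ^ ?e:] * Lam y a" by (simp add: L.hom_mult LD)
    also have "\<dots> = Polynomial.smult (D ^ ?e) (Lam y a)" by simp
    also have "\<dots> = P * q + r" using pd(1) lcP by simp
    finally show ?thesis using r by metis
  qed
  have cancel1: "f dvd D * c \<Longrightarrow> f dvd c" for c
  proof -
    assume fd: "f dvd D * c"
    show "f dvd c"
    proof (cases "D dvd 1")
      case True
      then obtain w where w: "1 = D * w" by (auto elim: dvdE)
      have eq: "w * (D * c) = c" using w by (simp add: mult_ac)
      have "f dvd w * (D * c)" using fd by (rule dvd_mult)
      then show ?thesis unfolding eq .
    next
      case False
      with Dc have pD: "prime_elem D" and nDh: "\<not> D dvd h" by auto
      from fd obtain g where g: "D * c = f * g" by (auto elim: dvdE)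
      then have "D dvd f * g" by (metis dvd_triv_left)
      then have "D dvd f \<or> D dvd g" using pD by (simp add: prime_elem_dvd_mult_iff)
      then show ?thesis
      proof
        assume "D dvd f"
        then have "D dvd f - D * mpVar y" by simp
        then have "D dvd h" by (simp add: f_def)
        with nDh show ?thesis by simp
      next
        assume "D dvd g"
        then obtain g' where "g = D * g'" by (auto elim: dvdE)
        with g have "D * c = D * (f * g')" by (simp add: mult_ac)
        with D0 have "c = f * g'" by simp
        then show ?thesis by simp
      qed
    qed
  qed
  have cancel: "f dvd D ^ e * c \<Longrightarrow> f dvd c" for e c
  proof (induct e arbitrary: c)
    case 0 then show ?case by simp
  next
    case (Suc e)
    then have "f dvd D * (D ^ e * c)" by (simp only: power_Suc mult.assoc)
    then have "f dvd D ^ e * c" by (rule cancel1)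
    then show ?case by (rule Suc.hyps)
  qed
  have f0: "f \<noteq> 0" using Lf P0 by auto
  have fu: "\<not> f dvd 1"
  proof
    assume "f dvd 1" then have "Lam y f dvd 1" by simp
    then have "degree P = 0" using Lf unit_poly_degree by metis
    with degP show False by simp
  qed
  have main: "f dvd a \<or> f dvd b" if fab: "f dvd a * b" for a b
  proof -
    obtain e1 q1 \<rho>1 where 1: "Lam y (D ^ e1 * a) = P * q1 + [:\<rho>1:]" using div by blast
    obtain e2 q2 \<rho>2 where 2: "Lam y (D ^ e2 * b) = P * q2 + [:\<rho>2:]" using div by blast
    have "Lam y ((D ^ e1 * a) * (D ^ e2 * b)) = P * (q1 * P * q2 + q1 * [:\<rho>2:] + [:\<rho>1:] * q2) + [:\<rho>1 * \<rho>2:]"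
    proof -
      have "Lam y ((D ^ e1 * a) * (D ^ e2 * b)) = Lam y (D ^ e1 * a) * Lam y (D ^ e2 * b)" by (rule L.hom_mult)
      also have "\<dots> = (P * q1 + [:\<rho>1:]) * (P * q2 + [:\<rho>2:])" by (simp only: 1 2)
      also have "\<dots> = P * (q1 * P * q2 + q1 * [:\<rho>2:] + [:\<rho>1:] * q2) + [:\<rho>1 * \<rho>2:]"
        by (simp add: algebra_simps)
      finally show ?thesis .
    qed
    moreover have "P dvd Lam y ((D ^ e1 * a) * (D ^ e2 * b))"
    proof -
      have eq: "(D ^ e1 * a) * (D ^ e2 * b) = (D ^ e1 * D ^ e2) * (a * b)" by (simp add: mult_ac)
      have "f dvd (D ^ e1 * D ^ e2) * (a * b)" using fab by (rule dvd_mult)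
      then have "f dvd (D ^ e1 * a) * (D ^ e2 * b)" unfolding eq .
      then have "Lam y f dvd Lam y ((D ^ e1 * a) * (D ^ e2 * b))" by (rule L.hom_dvd)
      then show ?thesis using Lf by simp
    qed
    ultimately have "P dvd P * (q1 * P * q2 + q1 * [:\<rho>2:] + [:\<rho>1:] * q2) + [:\<rho>1 * \<rho>2:]" by simp
    then have "P dvd [:\<rho>1 * \<rho>2:]" by (simp add: dvd_add_right_iff)
    then obtain g where g: "[:\<rho>1 * \<rho>2:] = P * g" by (auto elim: dvdE)
    have "\<rho>1 * \<rho>2 = 0"
    proof (rule ccontr)
      assume "\<rho>1 * \<rho>2 \<noteq> 0"
      then have "g \<noteq> 0" using g by auto
      then have "degree (P * g) = degree P + degree g" using P0 by (simp add: degree_mult_eq)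
      moreover have "degree (P * g) = 0" using g[symmetric] by simp
      ultimately show False using degP by simp
    qed
    then have "\<rho>1 = 0 \<or> \<rho>2 = 0" by simp
    then show ?thesis
    proof
      assume "\<rho>1 = 0"
      then have "Gam y (Lam y (D ^ e1 * a)) = Gam y P * Gam y q1" using 1 by (simp add: G.hom_mult)
      then have "f dvd D ^ e1 * a" using Gf by simp
      then show ?thesis using cancel by blast
    next
      assume "\<rho>2 = 0"
      then have "Gam y (Lam y (D ^ e2 * b)) = Gam y P * Gam y q2" using 2 by (simp add: G.hom_mult)
      then have "f dvd D ^ e2 * b" using Gf by simp
      then show ?thesis using cancel by blast
    qed
  qed
  show ?thesis unfolding f_def[symmetric] prime_elem_def using f0 fu main by blast
qed


definition injp :: "nat \<Rightarrow> nat \<Rightarrow> (nat \<Rightarrow> nat \<Rightarrow> nat) \<Rightarrow> bool" where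
  "injp a b u \<longleftrightarrow> (\<forall>i<a. \<forall>j<b. \<forall>i'<a. \<forall>j'<b. u i j = u i' j' \<longrightarrow> i = i' \<and> j = j')"

definition pinv :: "(nat \<Rightarrow> nat \<Rightarrow> nat) \<Rightarrow> nat \<Rightarrow> nat \<Rightarrow> nat \<Rightarrow> nat \<times> nat" where
  "pinv u a b w = (SOME p. fst p < a \<and> snd p < b \<and> u (fst p) (snd p) = w)"

lemma pinv:
  assumes "injp a b u" "i < a" "j < b"
  shows "pinv u a b (u i j) = (i, j)"
proof -
  have ex: "\<exists>p. fst p < a \<and> snd p < b \<and> u (fst p) (snd p) = u i j"
    using assms by (intro exI[of _ "(i,j)"]) auto
  define p where "p = pinv u a b (u i j)"
  have "fst p < a \<and> snd p < b \<and> u (fst p) (snd p) = u i j"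
    unfolding p_def pinv_def by (rule someI_ex[OF ex])
  with assms(1,2,3) have "fst p = i \<and> snd p = j" unfolding injp_def by blast
  then show ?thesis unfolding p_def by (metis prod.collapse)
qed

definition in_rng :: "(nat \<Rightarrow> nat \<Rightarrow> nat) \<Rightarrow> nat \<Rightarrow> nat \<Rightarrow> nat \<Rightarrow> bool" where
  "in_rng u a b w \<longleftrightarrow> (\<exists>i<a. \<exists>j<b. w = u i j)"

lemma det_zero_row:
  assumes A: "(A :: 'a :: comm_ring_1 mat) \<in> carrier_mat n n" and i: "i < n"
    and z: "\<And>j. j < n \<Longrightarrow> A $$ (i,j) = 0"
  shows "det A = 0"
  using laplace_expansion_row[OF A i] z by simp

subsection \<open>Generic determinant\<close>

definition gmat :: "nat \<Rightarrow> (nat \<Rightarrow> nat \<Rightarrow> nat) \<Rightarrow> 'a::comm_ring_1 mpoly mat" where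
  "gmat k u = mat k k (\<lambda>(i,l). mpVar (u i l))"

lemma id_ring_hom: "comm_ring_hom (id :: 'a::comm_ring_1 \<Rightarrow> 'a)"
  by unfold_locales auto

lemma Good_1: "Good (1::'a::comm_semiring_1)"
  by (simp add: Good_def)

lemma gdet_Good:
  assumes "injp k k u"
  shows "Good (det (gmat k u :: 'a::idom mpoly mat))"
  using assms
proof (induct k arbitrary: u)
  case 0
  have "(gmat 0 u :: 'a mpoly mat) \<in> carrier_mat 0 0" by (simp add: gmat_def)
  then have "det (gmat 0 u :: 'a mpoly mat) = 1" by (rule det_dim_zero)
  then show ?case using Good_1 by metis
next
  case (Suc k)
  let ?Y = "gmat (Suc k) u :: 'a mpoly mat"
  let ?y = "u 0 0"
  have Yc: "?Y \<in> carrier_mat (Suc k) (Suc k)" by (simp add: gmat_def)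
  have inj: "\<And>i j i' j'. i < Suc k \<Longrightarrow> j < Suc k \<Longrightarrow> i' < Suc k \<Longrightarrow> j' < Suc k \<Longrightarrow>
      u i j = u i' j' \<Longrightarrow> i = i' \<and> j = j'"
    using Suc.prems unfolding injp_def by blast
  have neq: "(u i j = u 0 0) = (i = 0 \<and> j = 0)" if "i < Suc k" "j < Suc k" for i j
    using inj[of i j 0 0] that by auto
  define u' where "u' = (\<lambda>i l. u (Suc i) (Suc l))"
  have injp': "injp k k u'" unfolding injp_def u'_def
  proof (intro allI impI)
    fix i j i' j' assume "i<k" "j<k" "i'<k" "j'<k" "u (Suc i) (Suc j) = u (Suc i') (Suc j')"
    then show "i = i' \<and> j = j'" using inj[of "Suc i" "Suc j" "Suc i'" "Suc j'"] by simp
  qed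
  have del00: "mat_delete ?Y 0 0 = gmat k u'"
    by (rule eq_matI) (auto simp: mat_delete_def gmat_def u'_def)
  define D where "D = det (gmat k u' :: 'a mpoly mat)"
  have GD: "Good D" unfolding D_def by (rule Suc.hyps[OF injp'])
  define h where "h = (\<Sum>j<k. ?Y $$ (0, Suc j) * cofactor ?Y 0 (Suc j))"
  have detY: "det ?Y = D * mpVar ?y + h"
  proof -
    have "det ?Y = (\<Sum>j<Suc k. ?Y $$ (0,j) * cofactor ?Y 0 j)"
      by (rule laplace_expansion_row[OF Yc]) simp
    also have "\<dots> = ?Y $$ (0,0) * cofactor ?Y 0 0 + h"
      unfolding h_def by (subst sum.lessThan_Suc_shift) simp
    also have "cofactor ?Y 0 0 = D" by (simp add: cofactor_def del00 D_def)
    also have "?Y $$ (0,0) = mpVar ?y" by (simp add: gmat_def)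
    finally show ?thesis by (simp add: mult.commute)
  qed
  have yD: "yfree ?y D" unfolding D_def
    by (rule yfree_det) (auto simp: gmat_def u'_def neq intro!: yfree_mpVar)
  have ym1: "yfree ?y ((-1) ^ n :: 'a mpoly)" for n
    by (intro yfree_power yfree_uminus yfree_1)
  have yh: "yfree ?y h" unfolding h_def cofactor_def
  proof (intro yfree_sum yfree_mult ym1)
    fix j assume j: "j \<in> {..<k}"
    show "yfree ?y (?Y $$ (0, Suc j))" using j
      by (auto simp: gmat_def neq intro!: yfree_mpVar)
    show "yfree ?y (det (mat_delete ?Y 0 (Suc j)))"
      by (rule yfree_det) (auto simp: gmat_def mat_delete_def neq intro!: yfree_mpVar)
  qed
  have D0: "D \<noteq> 0" using GD by (simp add: Good_def)
  have Dc: "D dvd 1 \<or> (prime_elem D \<and> \<not> D dvd h)"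
  proof (cases "D dvd 1")
    case True then show ?thesis by simp
  next
    case False
    with GD have pD: "prime_elem D" by (simp add: Good_def)
    have k0: "k \<noteq> 0"
    proof
      assume "k = 0"
      then have "(gmat k u' :: 'a mpoly mat) \<in> carrier_mat 0 0" by (simp add: gmat_def)
      then have "D = 1" unfolding D_def by (rule det_dim_zero)
      with False show False by simp
    qed
    let ?S = "swaprows_mat (Suc k) 0 1 :: 'a mat"
    define e where "e = (\<lambda>w. case pinv u (Suc k) (Suc k) w of (i, l) \<Rightarrow> ?S $$ (i, l))"
    have e: "i < Suc k \<Longrightarrow> l < Suc k \<Longrightarrow> e (u i l) = ?S $$ (i,l)" for i l
      using pinv[OF Suc.prems] by (simp add: e_def)
    define E where "E = ev e (id :: 'a \<Rightarrow> 'a)"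
    have EH: "comm_ring_hom E" unfolding E_def by (rule ev_ring_hom[OF id_ring_hom])
    interpret E: comm_ring_hom E by (rule EH)
    have Esemi: "comm_semiring_hom (id :: 'a \<Rightarrow> 'a)" by (rule id_hom)
    have EV: "E (mpVar w) = e w" for w unfolding E_def by (rule ev_mpVar[OF Esemi])
    have "map_mat E ?Y = ?S"
      by (rule eq_matI) (auto simp: gmat_def EV e)
    then have "E (det ?Y) = det ?S" by (metis E.hom_det)
    also have "det ?S = -1" using k0 by (intro det_swaprows_mat) auto
    finally have EY: "E (det ?Y) = -1" .
    have ED: "E D = 0"
    proof -
      have "E D = det (map_mat E (gmat k u'))" unfolding D_def by simp
      also have "\<dots> = 0"
      proof (rule det_zero_row[of _ k 0])
        show "map_mat E (gmat k u') \<in> carrier_mat k k" by (simp add: gmat_def)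
        show "0 < k" using k0 by simp
        fix j assume "j < k"
        then show "map_mat E (gmat k u') $$ (0, j) = 0"
          using k0 by (simp add: gmat_def EV e u'_def swaprows_mat_def)
      qed
      finally show ?thesis .
    qed
    have Eh: "E h = -1"
    proof -
      have "E h = E (det ?Y) - E (D * mpVar ?y)" by (simp add: detY E.hom_add)
      then show ?thesis by (simp add: EY ED E.hom_mult)
    qed
    have "\<not> D dvd h"
    proof
      assume "D dvd h"
      then have "E D dvd E h" by (rule E.hom_dvd)
      then show False by (simp add: ED Eh)
    qed
    with pD show ?thesis by simp
  qed
  have "prime_elem (D * mpVar ?y + h)"
    by (rule DH_prime[OF yD yh D0 Dc])
  then show ?case unfolding detY by (simp add: Good_def)
qed


lemma insert_index_inj: "insert_index l a = insert_index l b \<Longrightarrow> a = b"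
  by (auto simp: insert_index_def split: if_splits)

lemma insert_index_neq: "insert_index l a \<noteq> l"
  by (auto simp: insert_index_def)

lemma insert_index_lt: "a < k \<Longrightarrow> insert_index l a < Suc k"
  by (auto simp: insert_index_def)

lemma sum_insert_index:
  assumes l: "l < Suc k"
  shows "(\<Sum>t<Suc k. f t) = f l + (\<Sum>t<k. f (insert_index l t))"
proof -
  have img: "insert_index l ` {..<k} = {..<Suc k} - {l}"
  proof
    show "insert_index l ` {..<k} \<subseteq> {..<Suc k} - {l}"
      by (auto simp: insert_index_def)
    show "{..<Suc k} - {l} \<subseteq> insert_index l ` {..<k}"
    proof
      fix t assume t: "t \<in> {..<Suc k} - {l}"
      show "t \<in> insert_index l ` {..<k}"
      proof (cases "t < l")
        case True then have "t = insert_index l t" "t < k" using t l by (auto simp: insert_index_def)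
        then show ?thesis by blast
      next
        case False then have "t = insert_index l (t - 1)" "t - 1 < k" using t l by (auto simp: insert_index_def)
        then show ?thesis by blast
      qed
    qed
  qed
  have inj: "inj_on (insert_index l) {..<k}" by (auto intro: inj_onI insert_index_inj)
  have "(\<Sum>t<Suc k. f t) = f l + (\<Sum>t\<in>{..<Suc k} - {l}. f t)"
    using l by (subst sum.remove[of _ l]) auto
  also have "(\<Sum>t\<in>{..<Suc k} - {l}. f t) = (\<Sum>t<k. f (insert_index l t))"
    unfolding img[symmetric] by (subst sum.reindex[OF inj]) simp
  finally show ?thesis .
qed

lemma sum_single_nz:
  assumes "finite A" "a \<in> A" "\<And>x. x \<in> A \<Longrightarrow> x \<noteq> a \<Longrightarrow> f x = 0"
  shows "sum f A = f a"
  using assms by (subst sum.remove[of _ a]) (auto intro!: sum.neutral)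

lemma det_zero_col:
  assumes A: "(A :: 'a :: comm_ring_1 mat) \<in> carrier_mat n n" and j: "j < n"
    and z: "\<And>i. i < n \<Longrightarrow> A $$ (i,j) = 0"
  shows "det A = 0"
  using laplace_expansion_column[OF A j] z by simp

lemma det_id_except_row:
  fixes r :: "nat \<Rightarrow> 'a::comm_ring_1"
  assumes l: "l < n"
  shows "det (mat n n (\<lambda>(a,b). if a = l then r b else if a = b then 1 else 0)) = r l"
proof -
  let ?W = "mat n n (\<lambda>(a,b). if a = l then r b else if a = b then 1 else (0::'a))"
  have Wc: "?W \<in> carrier_mat n n" by simp
  have "det ?W = (\<Sum>b<n. ?W $$ (l,b) * cofactor ?W l b)"
    by (rule laplace_expansion_row[OF Wc l])
  also have "\<dots> = ?W $$ (l,l) * cofactor ?W l l"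
  proof (rule sum_single_nz)
    fix b assume b: "b \<in> {..<n}" "b \<noteq> l"
    have "det (mat_delete ?W l b) = 0"
    proof (rule det_zero_col[of _ "n - 1" "if l < b then l else l - 1"])
      show "mat_delete ?W l b \<in> carrier_mat (n - 1) (n - 1)" by (simp add: mat_delete_def)
      show "(if l < b then l else l - 1) < n - 1" using b l by auto
      fix i assume "i < n - 1"
      then show "mat_delete ?W l b $$ (i, if l < b then l else l - 1) = 0"
        using b l by (auto simp: mat_delete_def)
    qed
    then show "?W $$ (l,b) * cofactor ?W l b = 0" by (simp add: cofactor_def)
  qed (use l in auto)
  finally have "det ?W = ?W $$ (l,l) * cofactor ?W l l" .
  moreover have "mat_delete ?W l l = 1\<^sub>m (n - 1)"
    by (rule eq_matI) (auto simp: mat_delete_def)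
  ultimately show ?thesis using l by (simp add: cofactor_def)
qed

lemma det_id_except_col:
  fixes r :: "nat \<Rightarrow> 'a::comm_ring_1"
  assumes l: "l < n"
  shows "det (mat n n (\<lambda>(a,b). if b = l then r a else if a = b then 1 else 0)) = r l"
proof -
  let ?W = "mat n n (\<lambda>(a,b). if b = l then r a else if a = b then 1 else (0::'a))"
  have "transpose_mat ?W = mat n n (\<lambda>(a,b). if a = l then r b else if a = b then 1 else 0)"
    by (rule eq_matI) auto
  moreover have "det ?W = det (transpose_mat ?W)" by (rule det_transpose[of _ n, symmetric]) simp
  ultimately show ?thesis using det_id_except_row[OF l] by simp
qed

definition gsub :: "nat \<Rightarrow> nat \<Rightarrow> (nat \<Rightarrow> nat \<Rightarrow> nat) \<Rightarrow> (nat \<Rightarrow> nat \<Rightarrow> 'a::comm_ring_1 mpoly) \<Rightarrow> nat \<Rightarrow> 'a mpoly" where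
  "gsub a b v G w = (if in_rng v a b w then case_prod G (pinv v a b w) else mpVar w)"

lemma gsub_in: "injp a b v \<Longrightarrow> i < a \<Longrightarrow> j < b \<Longrightarrow> gsub a b v G (v i j) = G i j"
  by (auto simp: gsub_def in_rng_def pinv)

lemma gsub_out: "\<not> in_rng v a b w \<Longrightarrow> gsub a b v G w = mpVar w"
  by (simp add: gsub_def)

lemma gsub_inverse:
  assumes inj: "injp a b v"
    and H: "\<And>i j. i < a \<Longrightarrow> j < b \<Longrightarrow> Sub (gsub a b v G2) (G1 i j) = mpVar (v i j)"
  shows "Sub (gsub a b v G2) (gsub a b v G1 w) = mpVar w"
proof (cases "in_rng v a b w")
  case True
  then obtain i j where ij: "i < a" "j < b" "w = v i j" by (auto simp: in_rng_def)
  have "gsub a b v G1 (v i j) = G1 i j" by (rule gsub_in[OF inj ij(1,2)])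
  then show ?thesis using H[OF ij(1,2)] ij(3) by simp
next
  case False
  then show ?thesis by (simp add: gsub_out)
qed


definition MM :: "nat \<Rightarrow> nat \<Rightarrow> (nat \<Rightarrow> nat \<Rightarrow> 'a) \<Rightarrow> (nat \<Rightarrow> nat \<Rightarrow> 'a) \<Rightarrow> (nat \<Rightarrow> nat \<Rightarrow> nat) \<Rightarrow> 'a::comm_ring_1 mpoly mat" where
  "MM k s A B v = mat k k (\<lambda>(i,l). mpConst (A i l) + (\<Sum>j<s. mpVar (v i j) * mpConst (B j l)))"

definition fullrank :: "nat \<Rightarrow> nat \<Rightarrow> (nat \<Rightarrow> nat \<Rightarrow> 'a::comm_semiring_1) \<Rightarrow> (nat \<Rightarrow> nat \<Rightarrow> 'a) \<Rightarrow> bool" where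
  "fullrank k s A B \<longleftrightarrow> (\<forall>w. (\<forall>i<k. (\<Sum>l<k. A i l * w l) = 0) \<longrightarrow> (\<forall>j<s. (\<Sum>l<k. B j l * w l) = 0) \<longrightarrow> (\<forall>l<k. w l = 0))"

definition fresh :: "nat \<Rightarrow> nat \<Rightarrow> (nat \<Rightarrow> nat \<Rightarrow> 'a::comm_semiring_1) \<Rightarrow> (nat \<Rightarrow> nat \<Rightarrow> 'a) \<Rightarrow> nat set \<Rightarrow> (nat \<Rightarrow> nat) \<Rightarrow> bool" where
  "fresh k s A B F jf \<longleftrightarrow> F \<subseteq> {..<k} \<and> (\<forall>l\<in>F. jf l < s \<and> (\<forall>i<k. A i l = 0) \<and>
      (\<forall>j<s. B j l = (if j = jf l then 1 else 0)) \<and> (\<forall>l'<k. l' \<noteq> l \<longrightarrow> B (jf l) l' = 0))"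

definition mulf :: "nat \<Rightarrow> (nat \<Rightarrow> nat \<Rightarrow> 'a::comm_semiring_1) \<Rightarrow> 'a mat \<Rightarrow> nat \<Rightarrow> nat \<Rightarrow> 'a" where
  "mulf k A W = (\<lambda>i t. \<Sum>l<k. A i l * W $$ (l, t))"

lemma mpConst_sum: fixes f :: "'b \<Rightarrow> 'a::comm_ring_1" shows "mpConst (sum f S) = (\<Sum>x\<in>S. mpConst (f x))"
proof -
  interpret comm_ring_hom "mpConst :: 'a::comm_ring_1 \<Rightarrow> 'a mpoly" by (rule mpConst_ring_hom)
  show ?thesis by (rule hom_sum)
qed

lemma mpConst_diff: "mpConst (a - b) = mpConst a - (mpConst b :: 'a::comm_ring_1 mpoly)"
  by (simp add: mpConst_def single_diff)

lemma MM_carrier[simp]: "MM k s A B v \<in> carrier_mat k k" by (simp add: MM_def)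
lemma MM_index[simp]: "i < k \<Longrightarrow> l < k \<Longrightarrow> MM k s A B v $$ (i,l) = mpConst (A i l) + (\<Sum>j<s. mpVar (v i j) * mpConst (B j l))"
  by (simp add: MM_def)
lemma MM_dim[simp]: "dim_row (MM k s A B v) = k" "dim_col (MM k s A B v) = k"
  by (simp_all add: MM_def)

lemma MM_mult:
  fixes W :: "'a::comm_ring_1 mat"
  assumes W: "W \<in> carrier_mat k k"
  shows "MM k s A B v * map_mat mpConst W = MM k s (mulf k A W) (mulf k B W) v"
proof (rule eq_matI)
  fix i t assume "i < dim_row (MM k s (mulf k A W) (mulf k B W) v)" "t < dim_col (MM k s (mulf k A W) (mulf k B W) v)"
  then have it: "i < k" "t < k" by simp_all
  have "(MM k s A B v * map_mat mpConst W) $$ (i,t) = (\<Sum>l<k. MM k s A B v $$ (i,l) * mpConst (W $$ (l,t)))"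
    using it W by (simp add: scalar_prod_def atLeast0LessThan)
  also have "\<dots> = (\<Sum>l<k. mpConst (A i l * W $$ (l,t)) + (\<Sum>j<s. mpVar (v i j) * mpConst (B j l * W $$ (l,t))))"
    by (rule sum.cong) (auto simp: it mpConst_mult algebra_simps sum_distrib_left sum_distrib_right)
  also have "\<dots> = mpConst (mulf k A W i t) + (\<Sum>l<k. \<Sum>j<s. mpVar (v i j) * mpConst (B j l * W $$ (l,t)))"
    by (simp add: sum.distrib mulf_def mpConst_sum)
  also have "(\<Sum>l<k. \<Sum>j<s. mpVar (v i j) * mpConst (B j l * W $$ (l,t))) = (\<Sum>j<s. mpVar (v i j) * mpConst (mulf k B W j t))"
    by (subst sum.swap) (simp add: mulf_def mpConst_sum sum_distrib_left)
  finally show "(MM k s A B v * map_mat mpConst W) $$ (i,t) = MM k s (mulf k A W) (mulf k B W) v $$ (i,t)"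
    using it by simp
qed (use W in auto)

definition Wmat :: "nat \<Rightarrow> nat \<Rightarrow> (nat \<Rightarrow> 'a::comm_ring_1) \<Rightarrow> 'a mat" where
  "Wmat K l r = mat K K (\<lambda>(a,b). if a = l then r b else if a = b then 1 else 0)"

lemma mulf_Wmat:
  assumes "l < K" "t < K"
  shows "mulf K X (Wmat K l r) i t = X i l * r t + (if t = l then 0 else X i t)"
proof -
  have "mulf K X (Wmat K l r) i t = (\<Sum>l'<K. X i l' * (if l' = l then r t else if l' = t then 1 else 0))"
    unfolding mulf_def Wmat_def using assms by (intro sum.cong) auto
  also have "\<dots> = X i l * r t + (\<Sum>l'\<in>{..<K} - {l}. X i l' * (if l' = t then 1 else 0))"
    using assms by (subst sum.remove[of _ l]) (auto intro!: sum.cong)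
  also have "(\<Sum>l'\<in>{..<K} - {l}. X i l' * (if l' = t then 1 else 0)) = (if t = l then 0 else X i t)"
    using assms by (auto simp: if_distrib[of "\<lambda>x. _ * x"] sum.delta cong: if_cong)
  finally show ?thesis .
qed

lemma det_Wmat: "l < K \<Longrightarrow> det (Wmat K l r) = r l"
  unfolding Wmat_def by (rule det_id_except_row)

lemma unit_mpConst: "(a::'a::field) \<noteq> 0 \<Longrightarrow> mpConst a dvd 1"
proof -
  assume "a \<noteq> 0"
  then have "mpConst a * mpConst (inverse a) = (1 :: 'a mpoly)" by (simp flip: mpConst_mult)
  then show ?thesis by (metis dvdI)
qed

lemma allfresh:
  assumes inj: "injp K s v" and fr: "fresh K s A B F jf" and all: "\<forall>l<K. l \<in> F"
  shows "Good (det (MM K s A B v :: 'a::idom mpoly mat))"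
proof -
  have F: "\<And>l. l < K \<Longrightarrow> jf l < s \<and> (\<forall>i<K. A i l = 0) \<and> (\<forall>j<s. B j l = (if j = jf l then 1 else 0)) \<and> (\<forall>l'<K. l' \<noteq> l \<longrightarrow> B (jf l) l' = 0)"
    using fr all unfolding fresh_def by blast
  have "MM K s A B v = gmat K (\<lambda>i l. v i (jf l))"
  proof (rule eq_matI)
    fix i l assume "i < dim_row (gmat K (\<lambda>i l. v i (jf l)) :: 'a mpoly mat)" "l < dim_col (gmat K (\<lambda>i l. v i (jf l)) :: 'a mpoly mat)"
    then have il: "i < K" "l < K" by (simp_all add: gmat_def)
    have "(\<Sum>j<s. mpVar (v i j) * mpConst (B j l)) = (\<Sum>j<s. if j = jf l then mpVar (v i j) else (0 :: 'a mpoly))"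
      using F[OF il(2)] by (intro sum.cong) auto
    also have "\<dots> = mpVar (v i (jf l))" using F[OF il(2)] by (simp add: sum.delta)
    finally show "MM K s A B v $$ (i,l) = gmat K (\<lambda>i l. v i (jf l)) $$ (i,l)"
      using il F[OF il(2)] by (simp add: gmat_def)
  qed (auto simp: gmat_def)
  moreover have "injp K K (\<lambda>i l. v i (jf l))"
    unfolding injp_def
  proof (intro allI impI)
    fix i l i' l' assume *: "i < K" "l < K" "i' < K" "l' < K" "v i (jf l) = v i' (jf l')"
    then have "i = i' \<and> jf l = jf l'" using inj F unfolding injp_def by blast
    moreover have "l = l'"
    proof (rule ccontr)
      assume "l \<noteq> l'"
      then have "B (jf l) l' = 0" using F[OF *(2)] *(4) by blast
      moreover have "B (jf l') l' = 1" using F[OF *(4)] by simp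
      ultimately show False using \<open>i = i' \<and> jf l = jf l'\<close> by simp
    qed
    ultimately show "i = i' \<and> l = l'" by simp
  qed
  ultimately show ?thesis using gdet_Good by metis
qed


lemma mulf_sum_swap:
  "(\<Sum>t<K. mulf K X W i t * w t) = (\<Sum>l'<K. X i l' * (\<Sum>t<K. W $$ (l',t) * w t))"
proof -
  have "(\<Sum>t<K. mulf K X W i t * w t) = (\<Sum>t<K. \<Sum>l'<K. X i l' * (W $$ (l',t) * w t))"
    unfolding mulf_def by (simp add: sum_distrib_right mult.assoc)
  also have "\<dots> = (\<Sum>l'<K. \<Sum>t<K. X i l' * (W $$ (l',t) * w t))" by (rule sum.swap)
  also have "\<dots> = (\<Sum>l'<K. X i l' * (\<Sum>t<K. W $$ (l',t) * w t))" by (simp add: sum_distrib_left)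
  finally show ?thesis .
qed

lemma Wmat_mulvec:
  assumes "l < K" "l' < K"
  shows "(\<Sum>t<K. Wmat K l r $$ (l',t) * w t) = (if l' = l then (\<Sum>t<K. r t * w t) else w l')"
proof (cases "l' = l")
  case True then show ?thesis using assms by (auto simp: Wmat_def intro!: sum.cong)
next
  case False
  have "(\<Sum>t<K. Wmat K l r $$ (l',t) * w t) = (\<Sum>t<K. if t = l' then w t else 0)"
    using assms False by (intro sum.cong) (auto simp: Wmat_def)
  also have "\<dots> = w l'" using assms by (simp add: sum.delta)
  finally show ?thesis using False by simp
qed

lemma sum_split_at:
  assumes "l < (K::nat)"
  shows "(\<Sum>t<K. f t) = f l + (\<Sum>t\<in>{..<K} - {l}. f t)"
  using assms by (subst sum.remove[of _ l]) auto

lemma step_fresh: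
  fixes A B :: "nat \<Rightarrow> nat \<Rightarrow> 'a::field"
  assumes inj: "injp K s v" and frk: "fullrank K s A B" and fr: "fresh K s A B F jf"
    and l: "l < K" "l \<notin> F" and j0: "j0 < s" and b0: "B j0 l \<noteq> 0"
    and IH: "\<And>A' B' F' jf'. fullrank K s A' B' \<Longrightarrow> fresh K s A' B' F' jf' \<Longrightarrow> card F < card F'
      \<Longrightarrow> Good (det (MM K s A' B' v :: 'a mpoly mat))"
  shows "Good (det (MM K s A B v :: 'a mpoly mat))"
proof -
  define b where "b = B j0 l"
  have b0': "b \<noteq> 0" using b0 by (simp add: b_def)
  define r where "r = (\<lambda>t. if t = l then inverse b else - B j0 t * inverse b)"
  define W where "W = Wmat K l r"
  define A1 where "A1 = mulf K A W"
  define B1 where "B1 = mulf K B W"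
  have Wc: "W \<in> carrier_mat K K" by (simp add: W_def Wmat_def)
  have A1: "A1 i t = A i l * r t + (if t = l then 0 else A i t)" if "t < K" for i t
    unfolding A1_def W_def using mulf_Wmat[OF l(1) that] .
  have B1: "B1 j t = B j l * r t + (if t = l then 0 else B j t)" if "t < K" for j t
    unfolding B1_def W_def using mulf_Wmat[OF l(1) that] .
  have B1j0: "B1 j0 t = (if t = l then 1 else 0)" if "t < K" for t
    using B1[OF that, of j0] b0' by (auto simp: r_def b_def)
  have Fp: "lf < K \<and> jf lf < s \<and> (\<forall>i<K. A i lf = 0) \<and> (\<forall>j<s. B j lf = (if j = jf lf then 1 else 0))
      \<and> (\<forall>l'<K. l' \<noteq> lf \<longrightarrow> B (jf lf) l' = 0)" if "lf \<in> F" for lf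
    using fr that unfolding fresh_def by blast
  have lne: "lf \<noteq> l" if "lf \<in> F" for lf using l(2) that by blast
  have jfne: "jf lf \<noteq> j0" if "lf \<in> F" for lf
  proof
    assume "jf lf = j0"
    then have "B j0 l = 0" using Fp[OF that] l(1) lne[OF that] by metis
    with b0 show False by simp
  qed
  have Bj0F: "B j0 lf = 0" if "lf \<in> F" for lf using Fp[OF that] jfne[OF that] j0 by auto
  have rF: "r lf = 0" if "lf \<in> F" for lf using Bj0F[OF that] lne[OF that] by (simp add: r_def)
  \<comment> \<open>column operation\<close>
  have MMW: "MM K s A B v * map_mat mpConst W = MM K s A1 B1 v"
    unfolding A1_def B1_def by (rule MM_mult[OF Wc])
  have detW: "det W = inverse b" unfolding W_def by (subst det_Wmat[OF l(1)]) (simp add: r_def)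
  have dW: "det (map_mat mpConst W) = mpConst (inverse b)"
  proof -
    interpret comm_ring_hom "mpConst :: 'a \<Rightarrow> 'a mpoly" by (rule mpConst_ring_hom)
    show ?thesis using detW by simp
  qed
  have d1: "det (MM K s A1 B1 v) = det (MM K s A B v :: 'a mpoly mat) * mpConst (inverse b)"
  proof -
    have "map_mat mpConst W \<in> carrier_mat K K" using Wc by simp
    from det_mult[OF MM_carrier this, of s A B v] show ?thesis using MMW dW by simp
  qed
  have detrel: "det (MM K s A B v :: 'a mpoly mat) = mpConst b * det (MM K s A1 B1 v)"
  proof -
    have "mpConst b * det (MM K s A1 B1 v) = det (MM K s A B v :: 'a mpoly mat) * (mpConst b * mpConst (inverse b))"
      using d1 by (simp add: mult_ac)
    also have "mpConst b * mpConst (inverse b) = (1 :: 'a mpoly)" using b0' by (simp flip: mpConst_mult)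
    finally show ?thesis by simp
  qed
  \<comment> \<open>shear\<close>
  define T where "T = (\<lambda>i. mpConst (A1 i l) + (\<Sum>j\<in>{..<s}-{j0}. mpVar (v i j) * mpConst (B1 j l)) :: 'a mpoly)"
  define Gs where "Gs = (\<lambda>i j. if j = j0 then mpVar (v i j) - T i else mpVar (v i j))"
  define Gt where "Gt = (\<lambda>i j. if j = j0 then mpVar (v i j) + T i else mpVar (v i j))"
  define \<sigma> where "\<sigma> = gsub K s v Gs"
  define \<tau> where "\<tau> = gsub K s v Gt"
  have \<sigma>v: "\<sigma> (v i j) = Gs i j" if "i < K" "j < s" for i j unfolding \<sigma>_def by (rule gsub_in[OF inj that])
  have \<tau>v: "\<tau> (v i j) = Gt i j" if "i < K" "j < s" for i j unfolding \<tau>_def by (rule gsub_in[OF inj that])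
  interpret S: comm_ring_hom "Sub \<sigma>" by (rule Sub_hom)
  interpret T: comm_ring_hom "Sub \<tau>" by (rule Sub_hom)
  have Tfix\<sigma>: "Sub \<sigma> (T i) = T i" if "i < K" for i
  proof -
    have "Sub \<sigma> (T i) = mpConst (A1 i l) + (\<Sum>j\<in>{..<s}-{j0}. \<sigma> (v i j) * mpConst (B1 j l))"
      by (simp add: T_def S.hom_add S.hom_sum S.hom_mult)
    also have "\<dots> = T i" unfolding T_def
      by (intro arg_cong2[where f="(+)"] refl sum.cong) (auto simp: \<sigma>v that Gs_def)
    finally show ?thesis .
  qed
  have Tfix\<tau>: "Sub \<tau> (T i) = T i" if "i < K" for i
  proof -
    have "Sub \<tau> (T i) = mpConst (A1 i l) + (\<Sum>j\<in>{..<s}-{j0}. \<tau> (v i j) * mpConst (B1 j l))"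
      by (simp add: T_def T.hom_add T.hom_sum T.hom_mult)
    also have "\<dots> = T i" unfolding T_def
      by (intro arg_cong2[where f="(+)"] refl sum.cong) (auto simp: \<tau>v that Gt_def)
    finally show ?thesis .
  qed
  have inv1': "Sub (gsub K s v Gt) (Gs i j) = mpVar (v i j)" if ij: "i < K" "j < s" for i j
  proof -
    have "Sub \<tau> (Gs i j) = mpVar (v i j)"
    proof (cases "j = j0")
      case True then show ?thesis using ij \<tau>v Tfix\<tau> by (simp add: Gs_def Gt_def T.hom_minus)
    next
      case False then show ?thesis using ij \<tau>v by (simp add: Gs_def Gt_def)
    qed
    then show ?thesis by (simp only: \<tau>_def)
  qed
  have inv2': "Sub (gsub K s v Gs) (Gt i j) = mpVar (v i j)" if ij: "i < K" "j < s" for i j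
  proof -
    have "Sub \<sigma> (Gt i j) = mpVar (v i j)"
    proof (cases "j = j0")
      case True then show ?thesis using ij \<sigma>v Tfix\<sigma> by (simp add: Gs_def Gt_def S.hom_add)
    next
      case False then show ?thesis using ij \<sigma>v by (simp add: Gs_def Gt_def)
    qed
    then show ?thesis by (simp only: \<sigma>_def)
  qed
  have inv1: "Sub \<tau> (\<sigma> w) = mpVar w" for w
    unfolding \<sigma>_def \<tau>_def by (rule gsub_inverse[OF inj inv1'])
  have inv2: "Sub \<sigma> (\<tau> w) = mpVar w" for w
    unfolding \<sigma>_def \<tau>_def by (rule gsub_inverse[OF inj inv2'])
  define A2 where "A2 = (\<lambda>i t. if t = l then 0 else A1 i t)"
  define B2 where "B2 = (\<lambda>j t. if t = l then (if j = j0 then 1 else 0) else B1 j t)"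
  have shear: "map_mat (Sub \<sigma>) (MM K s A1 B1 v) = MM K s A2 B2 v"
  proof (rule eq_matI)
    fix i t assume "i < dim_row (MM K s A2 B2 v)" "t < dim_col (MM K s A2 B2 v)"
    then have it: "i < K" "t < K" by simp_all
    have "map_mat (Sub \<sigma>) (MM K s A1 B1 v) $$ (i,t) = mpConst (A1 i t) + (\<Sum>j<s. \<sigma> (v i j) * mpConst (B1 j t))"
      using it by (simp add: S.hom_add S.hom_sum S.hom_mult)
    also have "\<dots> = mpConst (A1 i t) + (Gs i j0 * mpConst (B1 j0 t) + (\<Sum>j\<in>{..<s}-{j0}. mpVar (v i j) * mpConst (B1 j t)))"
      using it j0 by (subst sum_split_at[OF j0]) (auto simp: \<sigma>v Gs_def intro!: sum.cong)
    also have "\<dots> = MM K s A2 B2 v $$ (i,t)"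
    proof (cases "t = l")
      case True
      have "(\<Sum>j<s. mpVar (v i j) * mpConst (B2 j t)) = (\<Sum>j<s. if j = j0 then mpVar (v i j) else 0)"
        using True by (intro sum.cong) (auto simp: B2_def)
      also have "\<dots> = mpVar (v i j0)" using j0 by (simp add: sum.delta)
      finally show ?thesis using it True B1j0[OF it(2)] by (simp add: A2_def Gs_def T_def)
    next
      case False
      have "(\<Sum>j<s. mpVar (v i j) * mpConst (B2 j t)) = mpVar (v i j0) * mpConst (B2 j0 t) + (\<Sum>j\<in>{..<s}-{j0}. mpVar (v i j) * mpConst (B1 j t))"
        using False by (subst sum_split_at[OF j0]) (auto simp: B2_def intro!: sum.cong)
      then show ?thesis using it False B1j0[OF it(2)] by (simp add: A2_def B2_def)
    qed
    finally show "map_mat (Sub \<sigma>) (MM K s A1 B1 v) $$ (i,t) = MM K s A2 B2 v $$ (i,t)" .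
  qed auto
  have frk1: "fullrank K s A1 B1"
    unfolding fullrank_def
  proof (rule allI, intro impI)
    fix w assume hA: "\<forall>i<K. (\<Sum>t<K. A1 i t * w t) = 0" and hB: "\<forall>j<s. (\<Sum>t<K. B1 j t * w t) = 0"
    define w' where "w' = (\<lambda>l'. (\<Sum>t<K. W $$ (l',t) * w t))"
    have w': "w' l' = (if l' = l then (\<Sum>t<K. r t * w t) else w l')" if "l' < K" for l'
      unfolding w'_def W_def by (rule Wmat_mulvec[OF l(1) that])
    have hA': "\<forall>i<K. (\<Sum>l'<K. A i l' * w' l') = 0"
      using hA unfolding A1_def w'_def by (simp add: mulf_sum_swap)
    have hB': "\<forall>j<s. (\<Sum>l'<K. B j l' * w' l') = 0"
      using hB unfolding B1_def w'_def by (simp add: mulf_sum_swap)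
    have "\<forall>l'<K. w' l' = 0" using frk hA' hB' unfolding fullrank_def by blast
    then have wo: "w t = 0" if "t < K" "t \<noteq> l" for t using w' that by force
    have "(\<Sum>t<K. r t * w t) = 0" using \<open>\<forall>l'<K. w' l' = 0\<close> w' l(1) by force
    moreover have "(\<Sum>t<K. r t * w t) = r l * w l"
      using l(1) wo by (subst sum_split_at[OF l(1)]) auto
    ultimately have "w l = 0" using b0' by (simp add: r_def)
    then show "\<forall>t<K. w t = 0" using wo by auto
  qed
  have frk2: "fullrank K s A2 B2"
    unfolding fullrank_def
  proof (rule allI, intro impI)
    fix w assume hA: "\<forall>i<K. (\<Sum>t<K. A2 i t * w t) = 0" and hB: "\<forall>j<s. (\<Sum>t<K. B2 j t * w t) = 0"
    have "(\<Sum>t<K. B2 j0 t * w t) = (\<Sum>t<K. if t = l then w t else 0)"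
      using B1j0 by (intro sum.cong) (auto simp: B2_def)
    also have "\<dots> = w l" using l(1) by (simp add: sum.delta)
    finally have wl: "w l = 0" using hB j0 by simp
    have "\<forall>i<K. (\<Sum>t<K. A1 i t * w t) = 0"
    proof (intro allI impI)
      fix i assume "i < K"
      have "(\<Sum>t<K. A1 i t * w t) = (\<Sum>t<K. A2 i t * w t)"
        using wl by (intro sum.cong) (auto simp: A2_def)
      then show "(\<Sum>t<K. A1 i t * w t) = 0" using hA \<open>i < K\<close> by simp
    qed
    moreover have "\<forall>j<s. (\<Sum>t<K. B1 j t * w t) = 0"
    proof (intro allI impI)
      fix j assume "j < s"
      have "(\<Sum>t<K. B1 j t * w t) = (\<Sum>t<K. B2 j t * w t)"
        using wl by (intro sum.cong) (auto simp: B2_def)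
      then show "(\<Sum>t<K. B1 j t * w t) = 0" using hB \<open>j < s\<close> by simp
    qed
    ultimately show "\<forall>t<K. w t = 0" using frk1 unfolding fullrank_def by blast
  qed
  have fr2: "fresh K s A2 B2 (insert l F) (jf(l := j0))"
    unfolding fresh_def
  proof (intro conjI ballI)
    show "insert l F \<subseteq> {..<K}" using fr l(1) unfolding fresh_def by auto
    fix lf assume lf: "lf \<in> insert l F"
    show "(jf(l := j0)) lf < s" using lf j0 Fp by auto
    show "\<forall>i<K. A2 i lf = 0"
      using lf Fp A1 rF lne by (auto simp: A2_def)
    show "\<forall>j<s. B2 j lf = (if j = (jf(l := j0)) lf then 1 else 0)"
      using lf Fp B1 rF lne by (auto simp: B2_def)
    show "\<forall>l'<K. l' \<noteq> lf \<longrightarrow> B2 ((jf(l := j0)) lf) l' = 0"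
    proof (intro allI impI)
      fix l' assume l': "l' < K" "l' \<noteq> lf"
      show "B2 ((jf(l := j0)) lf) l' = 0"
      proof (cases "lf = l")
        case True then show ?thesis using l' B1j0 by (auto simp: B2_def)
      next
        case False
        then have lfF: "lf \<in> F" using lf by simp
        have "B (jf lf) l = 0" using Fp[OF lfF] l(1) lne[OF lfF] by metis
        moreover have "B (jf lf) l' = 0" using Fp[OF lfF] l' by blast
        ultimately show ?thesis using False l' B1 jfne[OF lfF] by (auto simp: B2_def)
      qed
    qed
  qed
  have "finite F" using fr unfolding fresh_def by (meson finite_lessThan finite_subset)
  then have cardF: "card F < card (insert l F)" using l(2) by simp
  have G2: "Good (det (MM K s A2 B2 v :: 'a mpoly mat))" by (rule IH[OF frk2 fr2 cardF])
  have "Sub \<sigma> (det (MM K s A1 B1 v)) = det (MM K s A2 B2 v)"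
    using shear by (metis S.hom_det)
  then have "Good (Sub \<sigma> (det (MM K s A1 B1 v)))" using G2 by simp
  then have G1: "Good (det (MM K s A1 B1 v))" by (rule Good_Sub[OF inv1 inv2])
  show ?thesis unfolding detrel by (rule Good_unit_mult[OF unit_mpConst[OF b0'] G1])
qed


lemma insert_index_surj:
  assumes "t < Suc k" "t \<noteq> l" "l < Suc k"
  shows "\<exists>t'<k. t = insert_index l t'"
proof (cases "t < l")
  case True then show ?thesis using assms by (intro exI[of _ t]) (auto simp: insert_index_def)
next
  case False then show ?thesis using assms by (intro exI[of _ "t - 1"]) (auto simp: insert_index_def)
qed

lemma step_zero:
  fixes A B :: "nat \<Rightarrow> nat \<Rightarrow> 'a::field"
  assumes inj: "injp (Suc k) s v" and frk: "fullrank (Suc k) s A B" and fr: "fresh (Suc k) s A B F jf"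
    and l: "l < Suc k" "l \<notin> F" and Bz: "\<forall>j<s. B j l = 0"
    and IH: "\<And>s A B v F jf. injp k s v \<Longrightarrow> fullrank k s A B \<Longrightarrow> fresh k s A B F jf
      \<Longrightarrow> Good (det (MM k s A B v :: 'a mpoly mat))"
  shows "Good (det (MM (Suc k) s A B v :: 'a mpoly mat))"
proof -
  have "\<exists>i<Suc k. A i l \<noteq> 0"
  proof (rule ccontr)
    assume "\<not> (\<exists>i<Suc k. A i l \<noteq> 0)"
    then have z: "\<forall>i<Suc k. A i l = 0" by auto
    define w where "w = (\<lambda>t. if t = l then (1::'a) else 0)"
    have sw: "(\<Sum>t<Suc k. X t * w t) = X l" for X :: "nat \<Rightarrow> 'a"
      using l(1) by (simp add: w_def if_distrib[of "\<lambda>x. _ * x"] sum.delta cong: if_cong)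
    have "\<forall>i<Suc k. (\<Sum>t<Suc k. A i t * w t) = 0" unfolding sw using z by simp
    moreover have "\<forall>j<s. (\<Sum>t<Suc k. B j t * w t) = 0" unfolding sw using Bz by simp
    ultimately have "w l = 0" using frk l(1) unfolding fullrank_def by blast
    then show False by (simp add: w_def)
  qed
  then obtain i0 where i0: "i0 < Suc k" "A i0 l \<noteq> 0" by blast
  define a where "a = A i0 l"
  have a0: "a \<noteq> 0" using i0 by (simp add: a_def)
  define c where "c = (\<lambda>i. A i l / a)"
  define A' where "A' = (\<lambda>i t. if i = i0 then A i t else A i t - c i * A i0 t)"
  define Gr where "Gr = (\<lambda>i j. if i = i0 then mpVar (v i j) else mpVar (v i j) + mpConst (c i) * mpVar (v i0 j) :: 'a mpoly)"
  define Gr' where "Gr' = (\<lambda>i j. if i = i0 then mpVar (v i j) else mpVar (v i j) - mpConst (c i) * mpVar (v i0 j) :: 'a mpoly)"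
  define \<rho> where "\<rho> = gsub (Suc k) s v Gr"
  define \<rho>' where "\<rho>' = gsub (Suc k) s v Gr'"
  have \<rho>v: "\<rho> (v i j) = Gr i j" if "i < Suc k" "j < s" for i j unfolding \<rho>_def by (rule gsub_in[OF inj that])
  have \<rho>'v: "\<rho>' (v i j) = Gr' i j" if "i < Suc k" "j < s" for i j unfolding \<rho>'_def by (rule gsub_in[OF inj that])
  interpret S: comm_ring_hom "Sub \<rho>" by (rule Sub_hom)
  interpret S': comm_ring_hom "Sub \<rho>'" by (rule Sub_hom)
  have inv1': "Sub (gsub (Suc k) s v Gr') (Gr i j) = mpVar (v i j)" if ij: "i < Suc k" "j < s" for i j
  proof -
    have "Sub \<rho>' (Gr i j) = mpVar (v i j)"
      using ij i0(1) \<rho>'v by (auto simp: Gr_def Gr'_def S'.hom_add S'.hom_mult)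
    then show ?thesis by (simp only: \<rho>'_def)
  qed
  have inv2': "Sub (gsub (Suc k) s v Gr) (Gr' i j) = mpVar (v i j)" if ij: "i < Suc k" "j < s" for i j
  proof -
    have "Sub \<rho> (Gr' i j) = mpVar (v i j)"
      using ij i0(1) \<rho>v by (auto simp: Gr_def Gr'_def S.hom_minus S.hom_mult)
    then show ?thesis by (simp only: \<rho>_def)
  qed
  have inv1: "Sub \<rho>' (\<rho> w) = mpVar w" for w
    unfolding \<rho>_def \<rho>'_def by (rule gsub_inverse[OF inj inv1'])
  have inv2: "Sub \<rho> (\<rho>' w) = mpVar w" for w
    unfolding \<rho>_def \<rho>'_def by (rule gsub_inverse[OF inj inv2'])
  define rr where "rr = (\<lambda>x. if x = i0 then 1 else mpConst (c x) :: 'a mpoly)"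
  define R where "R = mat (Suc k) (Suc k) (\<lambda>(x,y). if y = i0 then rr x else if x = y then 1 else (0 :: 'a mpoly))"
  have detR: "det R = 1" unfolding R_def using det_id_except_col[OF i0(1), of rr] by (simp add: rr_def)
  have Rc: "R \<in> carrier_mat (Suc k) (Suc k)" by (simp add: R_def)
  define M' where "M' = (MM (Suc k) s A' B v :: 'a mpoly mat)"
  have rowop: "map_mat (Sub \<rho>) (MM (Suc k) s A B v) = R * M'"
  proof (rule eq_matI)
    fix i t assume "i < dim_row (R * M')" "t < dim_col (R * M')"
    then have it: "i < Suc k" "t < Suc k" by (simp_all add: R_def M'_def)
    have RM: "(R * M') $$ (i,t) = (\<Sum>x<Suc k. R $$ (i,x) * M' $$ (x,t))"
      using it by (simp add: R_def M'_def scalar_prod_def atLeast0LessThan)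
    show "map_mat (Sub \<rho>) (MM (Suc k) s A B v) $$ (i,t) = (R * M') $$ (i,t)"
    proof (cases "i = i0")
      case True
      have "(\<Sum>x<Suc k. R $$ (i,x) * M' $$ (x,t)) = (\<Sum>x<Suc k. if x = i0 then M' $$ (x,t) else 0)"
        using it True by (intro sum.cong) (auto simp: R_def rr_def)
      also have "\<dots> = M' $$ (i0,t)" using i0(1) by (simp add: sum.delta)
      finally have 1: "(R * M') $$ (i,t) = M' $$ (i0,t)" using RM by simp
      have 2: "map_mat (Sub \<rho>) (MM (Suc k) s A B v) $$ (i,t) = M' $$ (i0,t)"
        using it True i0(1) \<rho>v by (simp add: M'_def A'_def S.hom_add S.hom_sum S.hom_mult Gr_def)
      show ?thesis using 1 2 by simp
    next
      case False
      have "(\<Sum>x<Suc k. R $$ (i,x) * M' $$ (x,t)) = R $$ (i,i0) * M' $$ (i0,t) + (\<Sum>x\<in>{..<Suc k}-{i0}. R $$ (i,x) * M' $$ (x,t))"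
        by (rule sum_split_at[OF i0(1)])
      also have "(\<Sum>x\<in>{..<Suc k}-{i0}. R $$ (i,x) * M' $$ (x,t)) = (\<Sum>x\<in>{..<Suc k}-{i0}. if x = i then M' $$ (x,t) else 0)"
        using it by (intro sum.cong) (auto simp: R_def)
      also have "\<dots> = M' $$ (i,t)" using it False by (simp add: sum.delta)
      finally have "(\<Sum>x<Suc k. R $$ (i,x) * M' $$ (x,t)) = R $$ (i,i0) * M' $$ (i0,t) + M' $$ (i,t)" .
      moreover have "R $$ (i,i0) = mpConst (c i)" using it False i0(1) by (simp add: R_def rr_def)
      ultimately have "(R * M') $$ (i,t) = mpConst (c i) * M' $$ (i0,t) + M' $$ (i,t)"
        using RM by simp
      also have "\<dots> = mpConst (A i t) + (\<Sum>j<s. mpVar (v i j) * mpConst (B j t))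
          + mpConst (c i) * (\<Sum>j<s. mpVar (v i0 j) * mpConst (B j t))"
        using it i0(1) False by (simp add: M'_def A'_def mpConst_diff mpConst_mult algebra_simps)
      also have "\<dots> = map_mat (Sub \<rho>) (MM (Suc k) s A B v) $$ (i,t)"
        using it False \<rho>v
        by (simp add: S.hom_add S.hom_sum S.hom_mult Gr_def algebra_simps sum.distrib sum_distrib_left)
      finally show ?thesis by simp
    qed
  qed (auto simp: R_def M'_def)
  have SdetM: "Sub \<rho> (det (MM (Suc k) s A B v)) = det M'"
  proof -
    have "Sub \<rho> (det (MM (Suc k) s A B v)) = det (map_mat (Sub \<rho>) (MM (Suc k) s A B v))" by simp
    also have "\<dots> = det R * det M'" unfolding rowop by (rule det_mult[OF Rc]) (simp add: M'_def)
    finally show ?thesis by (simp add: detR)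
  qed
  have colA': "A' i l = (if i = i0 then a else 0)" for i
    using a0 by (simp add: A'_def c_def a_def)
  have colM': "M' $$ (i,l) = (if i = i0 then mpConst a else 0)" if "i < Suc k" for i
    using that l(1) Bz colA' by (simp add: M'_def)
  define A'' where "A'' = (\<lambda>i t. A' (insert_index i0 i) (insert_index l t))"
  define B'' where "B'' = (\<lambda>j t. B j (insert_index l t))"
  define v'' where "v'' = (\<lambda>i j. v (insert_index i0 i) j)"
  have del: "mat_delete M' i0 l = MM k s A'' B'' v''"
    by (rule eq_matI) (auto simp: mat_delete_def M'_def A''_def B''_def v''_def insert_index_def)
  have detM': "det M' = mpConst a * ((-1) ^ (i0 + l) * det (MM k s A'' B'' v''))"
  proof -
    have "det M' = (\<Sum>i<Suc k. M' $$ (i,l) * cofactor M' i l)"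
      by (rule laplace_expansion_column[OF _ l(1)]) (simp add: M'_def)
    also have "\<dots> = (\<Sum>i<Suc k. if i = i0 then mpConst a * cofactor M' i l else 0)"
      by (intro sum.cong) (auto simp: colM')
    also have "\<dots> = mpConst a * cofactor M' i0 l" using i0(1) by (simp add: sum.delta)
    finally show ?thesis by (simp add: cofactor_def del)
  qed
  have ins_lt: "insert_index x t < Suc k" if "t < k" for x t using that by (rule insert_index_lt)
  have inj'': "injp k s v''"
    unfolding injp_def v''_def
  proof (intro allI impI)
    fix i j i' j' assume *: "i < k" "j < s" "i' < k" "j' < s" "v (insert_index i0 i) j = v (insert_index i0 i') j'"
    then have "insert_index i0 i = insert_index i0 i' \<and> j = j'"
      using inj ins_lt unfolding injp_def by blast
    then show "i = i' \<and> j = j'" using insert_index_inj by blast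
  qed
  have Fp: "lf < Suc k \<and> jf lf < s \<and> (\<forall>i<Suc k. A i lf = 0) \<and> (\<forall>j<s. B j lf = (if j = jf lf then 1 else 0))
      \<and> (\<forall>l'<Suc k. l' \<noteq> lf \<longrightarrow> B (jf lf) l' = 0)" if "lf \<in> F" for lf
    using fr that unfolding fresh_def by blast
  define F'' where "F'' = {t. t < k \<and> insert_index l t \<in> F}"
  define jf'' where "jf'' = (\<lambda>t. jf (insert_index l t))"
  have fr'': "fresh k s A'' B'' F'' jf''"
    unfolding fresh_def
  proof (intro conjI ballI)
    show "F'' \<subseteq> {..<k}" by (auto simp: F''_def)
    fix t assume t: "t \<in> F''"
    then have tk: "t < k" and tF: "insert_index l t \<in> F" by (auto simp: F''_def)
    note P = Fp[OF tF]
    show "jf'' t < s" using P by (simp add: jf''_def)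
    show "\<forall>i<k. A'' i t = 0" using P ins_lt i0(1) by (auto simp: A''_def A'_def)
    show "\<forall>j<s. B'' j t = (if j = jf'' t then 1 else 0)" using P by (simp add: B''_def jf''_def)
    show "\<forall>l'<k. l' \<noteq> t \<longrightarrow> B'' (jf'' t) l' = 0"
    proof (intro allI impI)
      fix l' assume l': "l' < k" "l' \<noteq> t"
      then have "insert_index l l' \<noteq> insert_index l t" using insert_index_inj by blast
      moreover have "insert_index l l' < Suc k" using l'(1) by (rule ins_lt)
      ultimately show "B'' (jf'' t) l' = 0" using P by (simp add: B''_def jf''_def)
    qed
  qed
  have frk'': "fullrank k s A'' B''"
    unfolding fullrank_def
  proof (rule allI, intro impI)
    fix w'' assume hA: "\<forall>i<k. (\<Sum>t<k. A'' i t * w'' t) = 0" and hB: "\<forall>j<s. (\<Sum>t<k. B'' j t * w'' t) = 0"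
    define \<tau>0 where "\<tau>0 = - (\<Sum>t<k. A' i0 (insert_index l t) * w'' t) / a"
    define w where "w = (\<lambda>t. if t = l then \<tau>0 else w'' (if t < l then t else t - 1))"
    have wins: "w (insert_index l t) = w'' t" for t
      by (auto simp: w_def insert_index_def)
    have split: "(\<Sum>t<Suc k. X t * w t) = X l * \<tau>0 + (\<Sum>t<k. X (insert_index l t) * w'' t)" for X
    proof -
      have wl: "w l = \<tau>0" by (simp add: w_def)
      show ?thesis using sum_insert_index[OF l(1), of "\<lambda>t. X t * w t"] by (simp only: wins wl)
    qed
    have A'w: "(\<Sum>t<Suc k. A' i t * w t) = 0" if i: "i < Suc k" for i
    proof (cases "i = i0")
      case True
      have "(\<Sum>t<Suc k. A' i t * w t) = A' i l * \<tau>0 + (\<Sum>t<k. A' i (insert_index l t) * w'' t)" by (rule split)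
      also have "\<dots> = 0" using True a0 by (simp add: colA' \<tau>0_def)
      finally show ?thesis .
    next
      case False
      then obtain i'' where i'': "i'' < k" "i = insert_index i0 i''" using insert_index_surj[OF i _ i0(1)] by blast
      have "(\<Sum>t<Suc k. A' i t * w t) = A' i l * \<tau>0 + (\<Sum>t<k. A' i (insert_index l t) * w'' t)" by (rule split)
      also have "\<dots> = 0" using hA False i'' by (simp add: colA' A''_def)
      finally show ?thesis .
    qed
    have Bw: "(\<Sum>t<Suc k. B j t * w t) = 0" if "j < s" for j
    proof -
      have "(\<Sum>t<Suc k. B j t * w t) = B j l * \<tau>0 + (\<Sum>t<k. B j (insert_index l t) * w'' t)" by (rule split)
      also have "\<dots> = 0" using hB Bz that by (simp add: B''_def)
      finally show ?thesis .
    qed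
    have Aw0: "(\<Sum>t<Suc k. A i0 t * w t) = 0" using A'w[OF i0(1)] by (simp add: A'_def)
    have Aw: "(\<Sum>t<Suc k. A i t * w t) = 0" if i: "i < Suc k" for i
    proof (cases "i = i0")
      case True then show ?thesis using Aw0 by simp
    next
      case False
      have "(\<Sum>t<Suc k. A' i t * w t) = (\<Sum>t<Suc k. A i t * w t) - c i * (\<Sum>t<Suc k. A i0 t * w t)"
        using False by (simp add: A'_def algebra_simps sum_subtractf sum_distrib_left)
      then show ?thesis using A'w[OF i] Aw0 by simp
    qed
    have "\<forall>t<Suc k. w t = 0" using frk Aw Bw unfolding fullrank_def by blast
    then show "\<forall>t<k. w'' t = 0" using ins_lt wins by metis
  qed
  have Gminor: "Good (det (MM k s A'' B'' v'' :: 'a mpoly mat))" by (rule IH[OF inj'' frk'' fr''])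
  have um1: "((-1) ^ (i0 + l) :: 'a mpoly) dvd 1"
  proof -
    have "((-1) ^ (i0 + l) :: 'a mpoly) * (-1) ^ (i0 + l) = 1" by (simp flip: power_mult_distrib)
    then show ?thesis by (metis dvdI)
  qed
  have "Good (det M')" unfolding detM'
    by (intro Good_unit_mult[OF unit_mpConst[OF a0]] Good_unit_mult[OF um1] Gminor)
  then have "Good (Sub \<rho> (det (MM (Suc k) s A B v)))" by (simp add: SdetM)
  then show ?thesis by (rule Good_Sub[OF inv1 inv2])
qed


lemma main_Good:
  fixes A B :: "nat \<Rightarrow> nat \<Rightarrow> 'a::field"
  shows "injp k s v \<Longrightarrow> fullrank k s A B \<Longrightarrow> fresh k s A B F jf \<Longrightarrow> Good (det (MM k s A B v :: 'a mpoly mat))"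
proof (induct k arbitrary: s A B v F jf)
  case 0
  have "(MM 0 s A B v :: 'a mpoly mat) \<in> carrier_mat 0 0" by simp
  then have "det (MM 0 s A B v :: 'a mpoly mat) = 1" by (rule det_dim_zero)
  then show ?case using Good_1 by metis
next
  case (Suc k)
  have "\<forall>A B F jf. Suc k - card F = n \<longrightarrow> fullrank (Suc k) s A B \<longrightarrow> fresh (Suc k) s A B F jf
      \<longrightarrow> Good (det (MM (Suc k) s A B v :: 'a mpoly mat))" for n
  proof (induct n rule: less_induct)
    case (less n)
    show ?case
    proof (intro allI impI)
      fix A B :: "nat \<Rightarrow> nat \<Rightarrow> 'a" and F jf
      assume n: "Suc k - card F = n" and frk: "fullrank (Suc k) s A B" and fr: "fresh (Suc k) s A B F jf"
      show "Good (det (MM (Suc k) s A B v :: 'a mpoly mat))"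
      proof (cases "\<forall>l<Suc k. l \<in> F")
        case True then show ?thesis by (rule allfresh[OF Suc.prems(1) fr])
      next
        case False
        then obtain l where l: "l < Suc k" "l \<notin> F" by blast
        show ?thesis
        proof (cases "\<forall>j<s. B j l = 0")
          case True
          show ?thesis by (rule step_zero[OF Suc.prems(1) frk fr l True Suc.hyps])
        next
          case False
          then obtain j0 where j0: "j0 < s" "B j0 l \<noteq> 0" by blast
          show ?thesis
          proof (rule step_fresh[OF Suc.prems(1) frk fr l j0])
            fix A' B' :: "nat \<Rightarrow> nat \<Rightarrow> 'a" and F' jf'
            assume frk': "fullrank (Suc k) s A' B'" and fr': "fresh (Suc k) s A' B' F' jf'"
              and c: "card F < card F'"
            have "F' \<subseteq> {..<Suc k}" using fr' unfolding fresh_def by blast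
            then have "card F' \<le> Suc k" using card_mono[of "{..<Suc k}" F'] by simp
            then have "Suc k - card F' < n" using n c by linarith
            then show "Good (det (MM (Suc k) s A' B' v :: 'a mpoly mat))" using less frk' fr' by blast
          qed
        qed
      qed
    qed
  qed
  then show ?case using Suc.prems(2,3) by blast
qed

lemma sum_split_k:
  assumes "k \<le> (n::nat)"
  shows "(\<Sum>c<n. f c) = (\<Sum>c<k. f c) + (\<Sum>j<n-k. f (k + j))"
proof -
  have "(\<Sum>c<n. f c) = (\<Sum>c\<in>{0..<k}. f c) + (\<Sum>c\<in>{k..<n}. f c)"
  proof -
    have "(\<Sum>c\<in>{0..<k}. f c) + (\<Sum>c\<in>{k..<n}. f c) = (\<Sum>c\<in>{0..<n}. f c)"
      by (rule sum.atLeastLessThan_concat) (use assms in auto)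
    then show ?thesis by (simp add: atLeast0LessThan)
  qed
  also have "(\<Sum>c\<in>{k..<n}. f c) = (\<Sum>j\<in>{0..<n-k}. f (k + j))"
  proof -
    have e: "{k..<n} = {0+k..<(n-k)+k}" using assms by simp
    have "(\<Sum>c\<in>{k..<n}. f c) = (\<Sum>j\<in>{0..<n-k}. f (j + k))"
      unfolding e by (rule sum.shift_bounds_nat_ivl)
    then show ?thesis by (simp add: add.commute)
  qed
  finally show ?thesis by (simp add: atLeast0LessThan)
qed

lemma fE_MM:
  fixes E :: "'a::comm_ring_1 mat"
  assumes E: "E \<in> carrier_mat k n" and kn: "k \<le> n"
  shows "fE k n E = det (MM k (n-k) (\<lambda>i l. E $$ (l,i)) (\<lambda>j l. E $$ (l, k+j)) (\<lambda>i j. i*(n-k)+j))"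
proof -
  have "IX_mat k n * transpose_mat (map_mat mpConst E) = MM k (n-k) (\<lambda>i l. E $$ (l,i)) (\<lambda>j l. E $$ (l, k+j)) (\<lambda>i j. i*(n-k)+j)"
  proof (rule eq_matI)
    fix i l assume "i < dim_row (MM k (n-k) (\<lambda>i l. E $$ (l,i)) (\<lambda>j l. E $$ (l, k+j)) (\<lambda>i j. i*(n-k)+j) :: 'a mpoly mat)"
      "l < dim_col (MM k (n-k) (\<lambda>i l. E $$ (l,i)) (\<lambda>j l. E $$ (l, k+j)) (\<lambda>i j. i*(n-k)+j) :: 'a mpoly mat)"
    then have il: "i < k" "l < k" by simp_all
    have "(IX_mat k n * transpose_mat (map_mat mpConst E)) $$ (i,l) = (\<Sum>c<n. IX_mat k n $$ (i,c) * mpConst (E $$ (l,c)))"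
      using E il by (simp add: IX_mat_def scalar_prod_def atLeast0LessThan)
    also have "\<dots> = (\<Sum>c<k. IX_mat k n $$ (i,c) * mpConst (E $$ (l,c))) + (\<Sum>j<n-k. IX_mat k n $$ (i,k+j) * mpConst (E $$ (l,k+j)))"
      by (rule sum_split_k[OF kn])
    also have "(\<Sum>c<k. IX_mat k n $$ (i,c) * mpConst (E $$ (l,c))) = (\<Sum>c<k. if c = i then mpConst (E $$ (l,c)) else 0)"
      using il kn by (intro sum.cong) (auto simp: IX_mat_def)
    also have "\<dots> = mpConst (E $$ (l,i))" using il by (simp add: sum.delta)
    also have "(\<Sum>j<n-k. IX_mat k n $$ (i,k+j) * mpConst (E $$ (l,k+j))) = (\<Sum>j<n-k. mpVar (i*(n-k)+j) * mpConst (E $$ (l,k+j)))"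
      using il kn by (intro sum.cong) (auto simp: IX_mat_def)
    finally show "(IX_mat k n * transpose_mat (map_mat mpConst E)) $$ (i,l) = MM k (n-k) (\<lambda>i l. E $$ (l,i)) (\<lambda>j l. E $$ (l, k+j)) (\<lambda>i j. i*(n-k)+j) $$ (i,l)"
      using il by simp
  qed (use E in \<open>auto simp: IX_mat_def\<close>)
  then show ?thesis by (simp add: fE_def)
qed

lemma injp_rowmajor: "injp k m (\<lambda>i j. i*m+j)"
  unfolding injp_def
proof (intro allI impI)
  fix i j i' j' assume *: "i < k" "j < m" "i' < k" "j' < m" "i*m+j = i'*m+j'"
  have "(i*m+j) div m = i" "(i*m+j) mod m = j" using *(2) by simp_all
  moreover have "(i'*m+j') div m = i'" "(i'*m+j') mod m = j'" using *(4) by simp_all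
  ultimately show "i = i' \<and> j = j'" using *(5) by metis
qed


lemma zero_row_rank:
  fixes E :: "'a::field mat"
  assumes E: "E \<in> carrier_mat k n" and i: "i < k" and z: "\<forall>j<n. E $$ (i,j) = 0"
  shows "vec_space.rank k E \<noteq> k"
proof
  interpret V: vec_space "TYPE('a)" k .
  assume r: "V.rank E = k"
  obtain S where S: "maximal S (\<lambda>T. T \<subseteq> set (cols E) \<and> V.lin_indpt T)"
    using maximal_exists[of "(\<lambda>T. T \<subseteq> set (cols E) \<and> V.lin_indpt T)" "card (set (cols E))" "{}"]
    by (meson List.finite_set card_mono empty_iff empty_subsetI V.finite_lin_indpt2 rev_finite_subset)
  have cardS: "card S = k" using V.rank_card_indpt[OF E S] r by simp
  have Ssub: "S \<subseteq> set (cols E)" and Sind: "V.lin_indpt S" using S unfolding maximal_def by auto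
  have finS: "finite S" using Ssub finite_subset by blast
  obtain xs where xs: "set xs = S" "distinct xs" using finite_distinct_list[OF finS] by blast
  have lxs: "length xs = k" using xs cardS distinct_card by fastforce
  have xsc: "set xs \<subseteq> carrier_vec k" using xs Ssub E cols_dim by (metis carrier_matD(1) subset_trans)
  define C where "C = mat_of_cols k xs"
  have Cc: "C \<in> carrier_mat k k" using lxs mat_of_cols_carrier(1)[of k xs] by (simp add: C_def)
  have colsC: "cols C = xs" using xsc by (simp add: C_def)
  have "V.rank C = k" using V.lin_indpt_full_rank[OF Cc] colsC xs Sind by simp
  then have "det C \<noteq> 0" using V.det_rank_iff[OF Cc] by simp
  moreover have "det C = 0"
  proof (rule det_zero_row[OF Cc i])
    fix j assume j: "j < k"
    have "xs ! j \<in> set (cols E)" using xs Ssub j lxs nth_mem by blast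
    then obtain c where c: "c < n" "xs ! j = col E c" using E by (auto simp: cols_def)
    have "C $$ (i,j) = xs ! j $ i" using i j lxs by (simp add: C_def mat_of_cols_def)
    also have "\<dots> = E $$ (i,c)" using c i E by simp
    finally show "C $$ (i,j) = 0" using z c by simp
  qed
  ultimately show False by simp
qed

lemma rref_fullrank:
  fixes E :: "'a::field mat"
  assumes E: "E \<in> carrier_mat k n" and ref: "row_echelon_form E" and r: "vec_space.rank k E = k"
    and kn: "k \<le> n"
  shows "fullrank k (n-k) (\<lambda>i l. E $$ (l,i)) (\<lambda>j l. E $$ (l,k+j))"
proof -
  from ref obtain f where pf: "pivot_fun E f n" using E unfolding row_echelon_form_def by auto
  have dr: "dim_row E = k" using E by simp
  note P = pivot_funD[OF dr pf]
  have fl: "f i < n" if "i < k" for i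
  proof (rule ccontr)
    assume "\<not> f i < n"
    then have "f i = n" using P(1)[OF that] by simp
    then have "\<forall>j<n. E $$ (i,j) = 0" using P(2)[OF that] by simp
    then show False using zero_row_rank[OF E that] r by simp
  qed
  show ?thesis unfolding fullrank_def
  proof (rule allI, intro impI)
    fix w assume hA: "\<forall>i<k. (\<Sum>l<k. E $$ (l,i) * w l) = 0" and hB: "\<forall>j<n-k. (\<Sum>l<k. E $$ (l,k+j) * w l) = 0"
    have hC: "(\<Sum>l<k. E $$ (l,c) * w l) = 0" if "c < n" for c
    proof (cases "c < k")
      case True then show ?thesis using hA by simp
    next
      case False
      then have "c - k < n - k" "k + (c - k) = c" using that by auto
      then show ?thesis using hB by metis
    qed
    show "\<forall>l<k. w l = 0"
    proof (intro allI impI)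
      fix l assume l: "l < k"
      have "(\<Sum>l'<k. E $$ (l', f l) * w l') = (\<Sum>l'<k. if l' = l then w l' else 0)"
        using P(4)[OF l fl[OF l]] P(5)[OF l fl[OF l]] by (intro sum.cong) auto
      also have "\<dots> = w l" using l by (simp add: sum.delta)
      finally show "w l = 0" using hC[OF fl[OF l]] by simp
    qed
  qed
qed

lemma fE_Good:
  fixes E :: "'a::field mat"
  assumes "E \<in> carrier_mat k n" "row_echelon_form E" "vec_space.rank k E = k" "k \<le> n"
  shows "Good (fE k n E)"
proof -
  have fr: "fresh k (n-k) (\<lambda>i l. E $$ (l,i)) (\<lambda>j l. E $$ (l,k+j)) {} id" by (simp add: fresh_def)
  show ?thesis unfolding fE_MM[OF assms(1,4)]
    by (rule main_Good[OF injp_rowmajor rref_fullrank[OF assms] fr])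
qed

lemma prime_squarefree:
  fixes p :: "'a::idom"
  assumes p: "prime_elem p" shows "squarefree p"
proof (rule squarefreeI)
  fix g assume "g ^ 2 dvd p"
  then obtain w0 where "p = g ^ 2 * w0" by (auto elim: dvdE)
  then have pw: "p = g * (g * w0)" by (simp add: power2_eq_square mult_ac)
  have p0: "p \<noteq> 0" using p by simp
  have "p dvd g * (g * w0)" using pw by simp
  then have "p dvd g \<or> p dvd g * w0" using p by (simp add: prime_elem_dvd_mult_iff)
  then show "g dvd 1"
  proof
    assume "p dvd g"
    then obtain u where gpu: "g = p * u" by (auto elim: dvdE)
    have "p * (u * (g * w0)) = g * (g * w0)" using gpu by (simp add: mult_ac)
    also have "\<dots> = p" by (rule pw[symmetric])
    also have "\<dots> = p * 1" by simp
    finally have "p * (u * (g * w0)) = p * 1" .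
    then have "u * (g * w0) = 1" by (simp only: mult_left_cancel[OF p0])
    then have "1 = g * (u * w0)" by (simp add: mult_ac)
    then show ?thesis by (rule dvdI)
  next
    assume "p dvd g * w0"
    then obtain u where gw: "g * w0 = p * u" by (auto elim: dvdE)
    have "p * (g * u) = g * (p * u)" by (simp only: mult.left_commute)
    also have "\<dots> = g * (g * w0)" by (simp only: gw)
    also have "\<dots> = p" by (rule pw[symmetric])
    also have "\<dots> = p * 1" by simp
    finally have "p * (g * u) = p * 1" .
    then have "g * u = 1" by (simp only: mult_left_cancel[OF p0])
    then have "1 = g * u" by simp
    then show ?thesis by (rule dvdI)
  qed
qed

lemma unit_squarefree:
  fixes p :: "'a::comm_monoid_mult"
  assumes "p dvd 1" shows "squarefree p"
proof (rule squarefreeI)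
  fix g assume "g ^ 2 dvd p"
  moreover have "g dvd g ^ 2" by (simp add: power2_eq_square)
  ultimately show "g dvd 1" using assms by (meson dvd_trans)
qed

lemma Good_squarefree:
  assumes "Good (p::'a::idom)" shows "squarefree p"
proof -
  from assms have "p dvd 1 \<or> prime_elem p" by (simp add: Good_def)
  then show ?thesis
  proof
    assume "p dvd 1" then show ?thesis by (rule unit_squarefree)
  next
    assume "prime_elem p" then show ?thesis by (rule prime_squarefree)
  qed
qed

lemma lcm_exists:
  fixes S :: "'a::idom set"
  assumes "finite S" "\<forall>s\<in>S. Good s"
  shows "\<exists>L. is_lcm_of S L \<and> squarefree L"
  using assms
proof (induct S rule: finite_induct)
  case empty
  have "squarefree (1::'a)" by (rule unit_squarefree) simp
  then show ?case by (intro exI[of _ 1]) (auto simp: is_lcm_of_def)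
next
  case (insert s S)
  then obtain L where L: "is_lcm_of S L" "squarefree L" by auto
  have Gs: "Good s" using insert by simp
  show ?case
  proof (cases "s dvd L")
    case True
    then have "is_lcm_of (insert s S) L" using L(1) unfolding is_lcm_of_def by auto
    then show ?thesis using L(2) by blast
  next
    case False
    have "\<not> s dvd 1"
    proof
      assume "s dvd 1" then have "s dvd L" using one_dvd dvd_trans by blast
      with False show False by simp
    qed
    then have ps: "prime_elem s" using Gs unfolding Good_def by simp
    have s0: "s \<noteq> 0" using Gs by (simp add: Good_def)
    have lcm: "is_lcm_of (insert s S) (s * L)"
      unfolding is_lcm_of_def
    proof (intro conjI allI impI ballI)
      fix x assume "x \<in> insert s S"
      then show "x dvd s * L" using L(1) unfolding is_lcm_of_def by (auto intro: dvd_mult)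
    next
      fix M assume M: "\<forall>x\<in>insert s S. x dvd M"
      then have "L dvd M" using L(1) unfolding is_lcm_of_def by auto
      then obtain m where m: "M = L * m" by (auto elim: dvdE)
      have "s dvd L * m" using M m by auto
      then have "s dvd m" using ps False by (simp add: prime_elem_dvd_mult_iff)
      then show "s * L dvd M" using m by (auto simp: mult_ac elim!: dvdE)
    qed
    have sq: "squarefree (s * L)"
    proof (rule squarefreeI)
      fix g assume g2: "g ^ 2 dvd s * L"
      show "g dvd 1"
      proof (cases "s dvd g")
        case True
        then obtain g' where g': "g = s * g'" by (auto elim: dvdE)
        from g2 obtain x where "s * L = g ^ 2 * x" by (auto elim: dvdE)
        then have "s * L = s * (s * (g' ^ 2 * x))" using g' by (simp add: power2_eq_square mult_ac)
        then have "L = s * (g' ^ 2 * x)" using s0 by simp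
        then have "s dvd L" by simp
        with False show ?thesis by simp
      next
        case nsg: False
        have nsg2: "\<not> s dvd g ^ 2" using nsg ps by (simp add: power2_eq_square prime_elem_dvd_mult_iff)
        from g2 obtain x where x: "s * L = g ^ 2 * x" by (auto elim: dvdE)
        then have "s dvd g ^ 2 * x" by (metis dvd_triv_left)
        then have "s dvd x" using nsg2 ps by (simp add: prime_elem_dvd_mult_iff)
        then obtain x' where "x = s * x'" by (auto elim: dvdE)
        with x have "s * L = s * (g ^ 2 * x')" by (simp add: mult_ac)
        then have "L = g ^ 2 * x'" using s0 by simp
        then have "g ^ 2 dvd L" by simp
        then show ?thesis using L(2) by (rule squarefreeD[rotated])
      qed
    qed
    show ?thesis using lcm sq by blast
  qed
qed

lemma finite_carrier_mat: "finite (carrier_mat k n :: 'a::finite mat set)"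
proof -
  let ?I = "{0..<k} \<times> {0..<n}"
  have "carrier_mat k n \<subseteq> (\<lambda>f. mat k n f) ` (?I \<rightarrow>\<^sub>E (UNIV :: 'a set))"
  proof
    fix M :: "'a mat" assume M: "M \<in> carrier_mat k n"
    have "M = mat k n (restrict (\<lambda>p. M $$ p) ?I)" using M by (intro eq_matI) auto
    moreover have "restrict (\<lambda>p. M $$ p) ?I \<in> ?I \<rightarrow>\<^sub>E (UNIV :: 'a set)" by simp
    ultimately show "M \<in> (\<lambda>f. mat k n f) ` (?I \<rightarrow>\<^sub>E (UNIV :: 'a set))" by blast
  qed
  moreover have "finite ((\<lambda>f. mat k n f) ` (?I \<rightarrow>\<^sub>E (UNIV :: 'a set)))"
    by (intro finite_imageI finite_PiE) auto
  ultimately show ?thesis by (rule finite_subset)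
qed


theorem lemma4p4:
  fixes Fq :: "'a::{field,finite} set" and q m k n :: nat
  assumes "prime_power q" and "m \<ge> 1" and "1 \<le> k" and "k < n"
    and "is_subfield Fq" and "card Fq = q" and "card (UNIV :: 'a set) = q ^ m"
  shows "(\<forall>E\<in>rref_set Fq k n. squarefree (fE k n E))
       \<and> (\<exists>L. is_lcm_of (fE k n ` rref_set Fq k n) L)
       \<and> (\<forall>L. is_lcm_of (fE k n ` rref_set Fq k n) L \<longrightarrow> squarefree L)"
proof -
  have kn: "k \<le> n" using assms(4) by simp
  have G: "\<forall>E\<in>rref_set Fq k n. Good (fE k n E :: 'a mpoly)"
  proof
    fix E assume "E \<in> rref_set Fq k n"
    then have "E \<in> carrier_mat k n" "row_echelon_form E" "vec_space.rank k E = k"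
      by (auto simp: rref_set_def)
    then show "Good (fE k n E :: 'a mpoly)" using fE_Good kn by blast
  qed
  have fin: "finite (rref_set Fq k n)"
    by (rule finite_subset[OF _ finite_carrier_mat[of k n]]) (auto simp: rref_set_def)
  have p1: "\<forall>E\<in>rref_set Fq k n. squarefree (fE k n E :: 'a mpoly)"
    using G Good_squarefree by blast
  have G': "\<forall>s\<in>fE k n ` rref_set Fq k n. Good (s :: 'a mpoly)" using G by blast
  obtain L0 where L0: "is_lcm_of (fE k n ` rref_set Fq k n) (L0 :: 'a mpoly)" "squarefree L0"
    using lcm_exists[OF finite_imageI[OF fin] G'] by blast
  have p3: "\<forall>L. is_lcm_of (fE k n ` rref_set Fq k n) L \<longrightarrow> squarefree (L :: 'a mpoly)"
  proof (intro allI impI)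
    fix L :: "'a mpoly" assume L: "is_lcm_of (fE k n ` rref_set Fq k n) L"
    have "\<forall>s\<in>fE k n ` rref_set Fq k n. s dvd L0" using L0(1) unfolding is_lcm_of_def by blast
    then have "L dvd L0" using L unfolding is_lcm_of_def by blast
    then show "squarefree L" using L0(2) by (rule squarefree_mono)
  qed
  show ?thesis using p1 L0(1) p3 by blast
qed

end
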